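(* Let $M=(\mathcal{S},\mathcal{A},r,p)$ be a weakly communicating MDP with $S=|\mathcal{S}|$ states and $A=|\mathcal{A}|$ actions, optimal average reward $J^*$ and optimal bias function $v^*$ with span $\mathrm{sp}(v^* )$ (defined in the context). Let $T$ be the horizon and $\delta\in(0,1)$. Run Optimistic Q-learning (defined in the context) with confidence level $\delta$ and $$H=\min\left\{\sqrt{\frac{\mathrm{sp}(v^* )\,T}{SA}},\ \left(\frac{T}{SA\ln\frac{4T}{\delta}}\right)^{1/3}\right\}.$$ Then with probability at least $1-\delta$ the regret $R_T=\sum_{t=1}^T\big(J^*-r(s_t,a_t)\big)$ satisfies $$R_T=O\left(\sqrt{\mathrm{sp}(v^* )SAT}+\mathrm{sp}(v^* )\left(T^{2/3}\left(SA\ln\tfrac{T}{\delta}\right)^{1/3}+\sqrt{T\ln\tfrac{1}{\delta}}\right)\right),$$ where $O(\cdot)$ hides an absolute constant.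
   Context: An MDP $(\mathcal{S},\mathcal{A},r,p)$ has finite state set $\mathcal{S}$, finite action set $\mathcal{A}$, known reward $r:\mathcal{S}\times\mathcal{A}\to[0,1]$ and unknown transition kernel $p(s'|s,a)$. It is weakly communicating if $\mathcal{S}$ can be partitioned into a set of states that are transient under every stationary policy and a set in which every two states are accessible from each other under some stationary policy. For such MDPs there exist a unique $J^*\in[0,1]$ (the optimal long-run average reward, the same from every start state) and $q^*:\mathcal{S}\times\mathcal{A}\to\mathbb{R}$ (unique up to an additive constant) with $J^*+q^*(s,a)=r(s,a)+\mathbb{E}_{s'\sim p(\cdot|s,a)}[v^*(s')]$, where $v^*(s)=\max_a q^*(s,a)$; $\mathrm{sp}(v^* )=\max_s v^*(s)-\min_s v^*(s)$. The learner starts at an arbitrary $s_1$, at each step $t$ picks $a_t$ based on the history, and $s_{t+1}\sim p(\cdot|s_t,a_t)$. Optimistic Q-learning with parameters $H\ge 2$ and $\delta\in(0,1)$ (and known $T$, $\mathrm{sp}(v^* )$): set $\gamma=1-1/H$, $\hat V_1(s)=H$ for all $s$, $Q_1(s,a)=\hat Q_1(s,a)=H$, $n_1(s,a)=0$ for all $(s,a)$; let $\alpha_\tau=\frac{H+1}{H+\tau}$ and $b_\tau=4\,\mathrm{sp}(v^* )\sqrt{\frac{H}{\tau}\ln\frac{2T}{\delta}}$. For $t=1,\dots,T$: take $a_t\in\arg\max_a\hat Q_t(s_t,a)$, observe $s_{t+1}$; set $n_{t+1}(s_t,a_t)=n_t(s_t,a_t)+1$, $\tau=n_{t+1}(s_t,a_t)$,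 $Q_{t+1}(s_t,a_t)=(1-\alpha_\tau)Q_t(s_t,a_t)+\alpha_\tau[r(s_t,a_t)+\gamma\hat V_t(s_{t+1})+b_\tau]$, $\hat Q_{t+1}(s_t,a_t)=\min\{\hat Q_t(s_t,a_t),Q_{t+1}(s_t,a_t)\}$, $\hat V_{t+1}(s_t)=\max_a\hat Q_{t+1}(s_t,a)$; all other entries of $n,Q,\hat Q,\hat V$ are unchanged. *)

theory Defs
  imports "HOL-Probability.Probability"
begin

text \<open>MDP with state set {..<nS} and action set {..<nA} (natural-number carriers,
  so that the constant in the regret bound can be quantified outside all MDP data).\<close>

definition mdp_wf :: "nat \<Rightarrow> nat \<Rightarrow> (nat \<Rightarrow> nat \<Rightarrow> real) \<Rightarrow> (nat \<Rightarrow> nat \<Rightarrow> nat pmf) \<Rightarrow> bool" where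
  "mdp_wf nS nA r p \<longleftrightarrow> 0 < nS \<and> 0 < nA \<and>
     (\<forall>s<nS. \<forall>a<nA. 0 \<le> r s a \<and> r s a \<le> 1 \<and> set_pmf (p s a) \<subseteq> {..<nS})"

definition stat_policy :: "nat \<Rightarrow> nat \<Rightarrow> (nat \<Rightarrow> nat pmf) \<Rightarrow> bool" where
  "stat_policy nS nA \<pi> \<longleftrightarrow> (\<forall>s<nS. set_pmf (\<pi> s) \<subseteq> {..<nA})"

definition chain_kernel :: "(nat \<Rightarrow> nat \<Rightarrow> nat pmf) \<Rightarrow> (nat \<Rightarrow> nat pmf) \<Rightarrow> nat \<Rightarrow> nat pmf" where
  "chain_kernel p \<pi> s = bind_pmf (\<pi> s) (\<lambda>a. p s a)"

fun chain_dist :: "(nat \<Rightarrow> nat \<Rightarrow> nat pmf) \<Rightarrow> (nat \<Rightarrow> nat pmf) \<Rightarrow> nat \<Rightarrow> nat \<Rightarrow> nat pmf" where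
  "chain_dist p \<pi> 0 s = return_pmf s"
| "chain_dist p \<pi> (Suc n) s = bind_pmf (chain_dist p \<pi> n s) (chain_kernel p \<pi>)"

definition accessible :: "(nat \<Rightarrow> nat \<Rightarrow> nat pmf) \<Rightarrow> (nat \<Rightarrow> nat pmf) \<Rightarrow> nat \<Rightarrow> nat \<Rightarrow> bool" where
  "accessible p \<pi> s s' \<longleftrightarrow> (\<exists>n. pmf (chain_dist p \<pi> n s) s' > 0)"

text \<open>hit_within p \<pi> tgt n x: probability that the chain started at x visits tgt
  at some time 1..n.\<close>
fun hit_within :: "(nat \<Rightarrow> nat \<Rightarrow> nat pmf) \<Rightarrow> (nat \<Rightarrow> nat pmf) \<Rightarrow> nat \<Rightarrow> nat \<Rightarrow> nat \<Rightarrow> real" where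
  "hit_within p \<pi> tgt 0 x = 0"
| "hit_within p \<pi> tgt (Suc n) x =
     measure_pmf.expectation (chain_kernel p \<pi> x) (\<lambda>y. if y = tgt then 1 else hit_within p \<pi> tgt n y)"

definition transient :: "(nat \<Rightarrow> nat \<Rightarrow> nat pmf) \<Rightarrow> (nat \<Rightarrow> nat pmf) \<Rightarrow> nat \<Rightarrow> bool" where
  "transient p \<pi> s \<longleftrightarrow> (SUP n. hit_within p \<pi> s n s) < 1"

definition weakly_communicating :: "nat \<Rightarrow> nat \<Rightarrow> (nat \<Rightarrow> nat \<Rightarrow> nat pmf) \<Rightarrow> bool" where
  "weakly_communicating nS nA p \<longleftrightarrow>
     (\<exists>Tr C. Tr \<inter> C = {} \<and> Tr \<union> C = {..<nS} \<and>
        (\<forall>s\<in>Tr. \<forall>\<pi>. stat_policy nS nA \<pi> \<longrightarrow> transient p \<pi> s) \<and>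
        (\<forall>s\<in>C. \<forall>s'\<in>C. \<exists>\<pi>. stat_policy nS nA \<pi> \<and> accessible p \<pi> s s'))"

definition vfun :: "nat \<Rightarrow> (nat \<Rightarrow> nat \<Rightarrow> real) \<Rightarrow> nat \<Rightarrow> real" where
  "vfun nA q s = Max ((\<lambda>a. q s a) ` {..<nA})"

definition bellman :: "nat \<Rightarrow> nat \<Rightarrow> (nat \<Rightarrow> nat \<Rightarrow> real) \<Rightarrow> (nat \<Rightarrow> nat \<Rightarrow> nat pmf)
    \<Rightarrow> real \<Rightarrow> (nat \<Rightarrow> nat \<Rightarrow> real) \<Rightarrow> bool" where
  "bellman nS nA r p J q \<longleftrightarrow>
     (\<forall>s<nS. \<forall>a<nA. J + q s a = r s a + measure_pmf.expectation (p s a) (vfun nA q))"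

definition span :: "nat \<Rightarrow> (nat \<Rightarrow> real) \<Rightarrow> real" where
  "span nS v = Max (v ` {..<nS}) - Min (v ` {..<nS})"

text \<open>Algorithm state: (history of (s_t,a_t), current state,
  counts n, Q, Qhat, Vhat). Ties in the argmax are broken by a selector sel, which may
  depend on the history, the current state and the row Qhat(s,.).\<close>

type_synonym qstate =
  "(nat \<times> nat) list \<times> nat \<times> (nat \<Rightarrow> nat \<Rightarrow> nat) \<times> (nat \<Rightarrow> nat \<Rightarrow> real) \<times> (nat \<Rightarrow> nat \<Rightarrow> real) \<times> (nat \<Rightarrow> real)"

definition ql_alpha :: "real \<Rightarrow> nat \<Rightarrow> real" where
  "ql_alpha H \<tau> = (H + 1) / (H + real \<tau>)"

definition ql_bonus :: "real \<Rightarrow> nat \<Rightarrow> real \<Rightarrow> real \<Rightarrow> nat \<Rightarrow> real" where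
  "ql_bonus sp T \<delta> H \<tau> = 4 * sp * sqrt (H / real \<tau> * ln (2 * real T / \<delta>))"

definition ql_init :: "real \<Rightarrow> nat \<Rightarrow> qstate" where
  "ql_init H s1 = ([], s1, (\<lambda>_ _. 0), (\<lambda>_ _. H), (\<lambda>_ _. H), (\<lambda>_. H))"

definition ql_step :: "nat \<Rightarrow> (nat \<Rightarrow> nat \<Rightarrow> real) \<Rightarrow> (nat \<Rightarrow> nat \<Rightarrow> nat pmf)
    \<Rightarrow> real \<Rightarrow> nat \<Rightarrow> real \<Rightarrow> real
    \<Rightarrow> ((nat \<times> nat) list \<Rightarrow> nat \<Rightarrow> (nat \<Rightarrow> real) \<Rightarrow> nat)
    \<Rightarrow> qstate \<Rightarrow> qstate pmf" where
  "ql_step nA r p sp T \<delta> H sel st =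
     (case st of (h, s, n, Q, Qh, V) \<Rightarrow>
       let a = sel h s (\<lambda>b. Qh s b);
           \<gamma> = 1 - 1 / H;
           \<tau> = n s a + 1
       in map_pmf (\<lambda>s'.
            let q' = (1 - ql_alpha H \<tau>) * Q s a
                     + ql_alpha H \<tau> * (r s a + \<gamma> * V s' + ql_bonus sp T \<delta> H \<tau>);
                n' = n(s := (n s)(a := \<tau>));
                Q' = Q(s := (Q s)(a := q'));
                Qh' = Qh(s := (Qh s)(a := min (Qh s a) q'));
                V' = V(s := Max ((\<lambda>b. Qh' s b) ` {..<nA}))
            in (h @ [(s, a)], s', n', Q', Qh', V')) (p s a))"

fun ql_run :: "nat \<Rightarrow> (nat \<Rightarrow> nat \<Rightarrow> real) \<Rightarrow> (nat \<Rightarrow> nat \<Rightarrow> nat pmf)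
    \<Rightarrow> real \<Rightarrow> nat \<Rightarrow> real \<Rightarrow> real
    \<Rightarrow> ((nat \<times> nat) list \<Rightarrow> nat \<Rightarrow> (nat \<Rightarrow> real) \<Rightarrow> nat) \<Rightarrow> nat \<Rightarrow> nat \<Rightarrow> qstate pmf" where
  "ql_run nA r p sp T \<delta> H sel s1 0 = return_pmf (ql_init H s1)"
| "ql_run nA r p sp T \<delta> H sel s1 (Suc k) =
     bind_pmf (ql_run nA r p sp T \<delta> H sel s1 k) (ql_step nA r p sp T \<delta> H sel)"

definition regret :: "(nat \<Rightarrow> nat \<Rightarrow> real) \<Rightarrow> real \<Rightarrow> (nat \<times> nat) list \<Rightarrow> real" where
  "regret r J h = (\<Sum>(s, a) \<leftarrow> h. J - r s a)"

end

theory Submission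
  imports Defs
begin


fun aw :: "real \<Rightarrow> nat \<Rightarrow> nat \<Rightarrow> real" where
  "aw H k 0 = 0"
| "aw H k (Suc m) = (if k = Suc m then ql_alpha H (Suc m) else (1 - ql_alpha H (Suc m)) * aw H k m)"

lemma aw_zero: "m < k \<Longrightarrow> aw H k m = 0"
  by (induction m) auto

lemma aw_zero0: "aw H 0 m = 0"
  by (induction m) auto

lemma one_minus_alpha: "H > 0 \<Longrightarrow> 1 - ql_alpha H (Suc m) = real m / (H + real (Suc m))"
  unfolding ql_alpha_def by (simp add: field_simps)

lemma alpha_le1: "H > 0 \<Longrightarrow> 1 \<le> m \<Longrightarrow> ql_alpha H m \<le> 1"
  unfolding ql_alpha_def by (simp add: field_simps)

lemma alpha_nonneg: "H > 0 \<Longrightarrow> 0 \<le> ql_alpha H m"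
  unfolding ql_alpha_def by (simp add: field_simps)

lemma aw_nonneg: "H > 0 \<Longrightarrow> 0 \<le> aw H k m"
proof (induction m)
  case (Suc m)
  then show ?case using one_minus_alpha[of H m] alpha_nonneg[of H "Suc m"] by auto
qed simp

lemma aw_sum: "H > 0 \<Longrightarrow> 1 \<le> m \<Longrightarrow> (\<Sum>k<m. aw H (Suc k) m) = 1"
proof (induction m)
  case 0 then show ?case by simp
next
  case (Suc m)
  show ?case
  proof (cases "m = 0")
    case True then show ?thesis using Suc by (simp add: ql_alpha_def)
  next
    case False
    have "(\<Sum>k<Suc m. aw H (Suc k) (Suc m)) = (\<Sum>k<m. aw H (Suc k) (Suc m)) + ql_alpha H (Suc m)"
      by simp
    also have "(\<Sum>k<m. aw H (Suc k) (Suc m)) = (\<Sum>k<m. (1 - ql_alpha H (Suc m)) * aw H (Suc k) m)"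
      by (rule sum.cong) auto
    also have "\<dots> = (1 - ql_alpha H (Suc m)) * (\<Sum>k<m. aw H (Suc k) m)"
      by (simp add: sum_distrib_left)
    also have "(\<Sum>k<m. aw H (Suc k) m) = 1" using Suc False by simp
    finally show ?thesis by simp
  qed
qed

lemma aw_le: "H > 0 \<Longrightarrow> aw H k m \<le> (H + 1) / (H + real m)"
proof (induction m)
  case 0 then show ?case by simp
next
  case (Suc m)
  show ?case
  proof (cases "k = Suc m")
    case True then show ?thesis by (simp add: ql_alpha_def)
  next
    case False
    have "aw H k (Suc m) = real m / (H + real (Suc m)) * aw H k m"
      using False one_minus_alpha[OF Suc.prems] by simp
    also have "\<dots> \<le> real m / (H + real (Suc m)) * ((H + 1) / (H + real m))"
      by (rule mult_left_mono) (use Suc in auto)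
    also have "\<dots> \<le> (H + 1) / (H + real (Suc m))"
    proof -
      have "real m / (H + real m) \<le> 1" using Suc.prems by simp
      then have "(H+1) / (H + real (Suc m)) * (real m / (H + real m)) \<le> (H+1) / (H + real (Suc m)) * 1"
        by (intro mult_left_mono) (use Suc.prems in auto)
      then show ?thesis by (simp add: field_simps)
    qed
    finally show ?thesis .
  qed
qed

lemma aw_tail: assumes "H > 0" "1 \<le> k" "k \<le> N" shows
   "(\<Sum>m\<in>{k..N}. aw H k m) = (1 + 1/H) - aw H k N * real N / H"
  using assms(3)
proof (induction N rule: dec_induct)
  case base
  obtain k' where k: "k = Suc k'" using \<open>1 \<le> k\<close> by (cases k) auto
  have a: "aw H k k = (H+1)/(H+real k)" using k by (simp add: ql_alpha_def)
  have eq: "(H+1)/(H+real k) = (1 + 1/H) - (H+1)/(H+real k) * real k / H"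
  proof -
    define x where "x = real k"
    have h: "H > 0" "x \<ge> 0" using assms(1) x_def by auto
    define a where "a = (H+1)/(H+x)"
    have e: "a * (H + x) = H + 1" unfolding a_def using h by simp
    have "a = (1 + 1/H) - a * x / H"
    proof -
      have "H * (H * a + a * x) = H * (1 + H)" using e by (simp add: algebra_simps)
      then have "H * (H * a) + H * (a * x) = H + H * H" by (simp add: algebra_simps)
      then show ?thesis using h by (simp add: field_simps)
    qed
    then show ?thesis unfolding a_def x_def .
  qed
  have s: "(\<Sum>m\<in>{k..k}. aw H k m) = aw H k k" by simp
  show ?case unfolding s a by (rule eq)
next
  case (step N)
  have e: "aw H k (Suc N) = real N / (H + real (Suc N)) * aw H k N"
    using step one_minus_alpha[of H N] assms by simp
  have "(\<Sum>m\<in>{k..Suc N}. aw H k m) = (\<Sum>m\<in>{k..N}. aw H k m) + aw H k (Suc N)"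
    using step by (simp add: atLeastAtMostSuc_conv)
  also have "\<dots> = (1 + 1/H) - aw H k N * real N / H + aw H k (Suc N)" using step by simp
  also have "\<dots> = (1 + 1/H) - aw H k (Suc N) * real (Suc N) / H"
  proof -
    define z where "z = aw H k (Suc N)"
    define a where "a = aw H k N"
    have hp: "H + real (Suc N) \<noteq> 0" using assms(1) by simp
    have hz0: "z * (H + real (Suc N)) = a * real N" unfolding z_def a_def e using hp by simp
    then have hz: "z * (H + real N + 1) = a * real N" by (simp add: algebra_simps)
    have "H * (z * H + z * (real N + 1)) = H * (a * real N)" using hz by (simp add: algebra_simps)
    then have "z * H + z * (real N + 1) = a * real N" using assms(1) by simp
    then have "- a * real N / H + z = - z * (real N + 1) / H" using assms(1) by (simp add: field_simps)
    then show ?thesis unfolding z_def[symmetric] a_def[symmetric] by simp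
  qed
  finally show ?case .
qed

lemma aw_tail_le: "H > 0 \<Longrightarrow> 1 \<le> k \<Longrightarrow> (\<Sum>m\<in>{k..<N}. aw H k m) \<le> 1 + 1/H"
proof (cases "k < N")
  case True
  assume H: "H > 0" and k: "1 \<le> k"
  then have "{k..<N} = {k..N-1}" using True by auto
  then have "(\<Sum>m\<in>{k..<N}. aw H k m) = (1 + 1/H) - aw H k (N-1) * real (N-1) / H"
    using aw_tail[OF H k, of "N-1"] True by simp
  also have "\<dots> \<le> 1 + 1/H" using aw_nonneg[OF H, of k "N-1"] H by simp
  finally show ?thesis .
next
  case False
  assume H: "H > 0"
  then show ?thesis using False by (simp add: add_nonneg_nonneg)
qed

lemma aw_sq_sum: "H > 0 \<Longrightarrow> 1 \<le> m \<Longrightarrow> (\<Sum>k<m. (aw H (Suc k) m)\<^sup>2) \<le> (H + 1) / (H + real m)"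
proof -
  assume H: "H > 0" and m: "1 \<le> m"
  have "(\<Sum>k<m. (aw H (Suc k) m)\<^sup>2) \<le> (\<Sum>k<m. (H + 1) / (H + real m) * aw H (Suc k) m)"
  proof (rule sum_mono)
    fix k assume "k \<in> {..<m}"
    have "aw H (Suc k) m * aw H (Suc k) m \<le> (H + 1) / (H + real m) * aw H (Suc k) m"
      by (rule mult_right_mono) (use aw_le[OF H] aw_nonneg[OF H] in auto)
    then show "(aw H (Suc k) m)\<^sup>2 \<le> (H + 1) / (H + real m) * aw H (Suc k) m"
      by (simp add: power2_eq_square)
  qed
  also have "\<dots> = (H + 1) / (H + real m) * (\<Sum>k<m. aw H (Suc k) m)" by (rule sum_distrib_left[symmetric])
  also have "\<dots> = (H + 1) / (H + real m)" using aw_sum[OF H m] by simp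
  finally show ?thesis .
qed


definition det_act :: "((nat \<times> nat) list \<Rightarrow> nat \<Rightarrow> (nat \<Rightarrow> real) \<Rightarrow> nat) \<Rightarrow> qstate \<Rightarrow> nat" where
  "det_act sel st = (case st of (h, s, n, Q, Qh, V) \<Rightarrow> sel h s (\<lambda>b. Qh s b))"

definition det_step :: "nat \<Rightarrow> (nat \<Rightarrow> nat \<Rightarrow> real) \<Rightarrow> real \<Rightarrow> nat \<Rightarrow> real \<Rightarrow> real
    \<Rightarrow> ((nat \<times> nat) list \<Rightarrow> nat \<Rightarrow> (nat \<Rightarrow> real) \<Rightarrow> nat) \<Rightarrow> qstate \<Rightarrow> nat \<Rightarrow> qstate" where
  "det_step nA r sp T \<delta> H sel st s' =
     (case st of (h, s, n, Q, Qh, V) \<Rightarrow>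
       let a = sel h s (\<lambda>b. Qh s b);
           \<gamma> = 1 - 1 / H;
           \<tau> = n s a + 1;
           q' = (1 - ql_alpha H \<tau>) * Q s a
                     + ql_alpha H \<tau> * (r s a + \<gamma> * V s' + ql_bonus sp T \<delta> H \<tau>);
           n' = n(s := (n s)(a := \<tau>));
           Q' = Q(s := (Q s)(a := q'));
           Qh' = Qh(s := (Qh s)(a := min (Qh s a) q'));
           V' = V(s := Max ((\<lambda>b. Qh' s b) ` {..<nA}))
       in (h @ [(s, a)], s', n', Q', Qh', V'))"

lemma ql_step_eq: "ql_step nA r p sp T \<delta> H sel st =
   map_pmf (det_step nA r sp T \<delta> H sel st) (p (fst (snd st)) (det_act sel st))"
  by (cases st) (simp add: ql_step_def det_step_def[abs_def] det_act_def Let_def)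

definition "hist_of (st::qstate) = fst st"
definition "cur_of (st::qstate) = fst (snd st)"
definition "n_of (st::qstate) = fst (snd (snd st))"
definition "Q_of (st::qstate) = fst (snd (snd (snd st)))"
definition "Qh_of (st::qstate) = fst (snd (snd (snd (snd st))))"
definition "V_of (st::qstate) = snd (snd (snd (snd (snd st))))"

lemma det_act_eq: "det_act sel st = sel (hist_of st) (cur_of st) (\<lambda>b. Qh_of st (cur_of st) b)"
  by (cases st) (simp add: det_act_def hist_of_def cur_of_def Qh_of_def)

definition qnew :: "(nat \<Rightarrow> nat \<Rightarrow> real) \<Rightarrow> real \<Rightarrow> nat \<Rightarrow> real \<Rightarrow> real
    \<Rightarrow> ((nat \<times> nat) list \<Rightarrow> nat \<Rightarrow> (nat \<Rightarrow> real) \<Rightarrow> nat) \<Rightarrow> qstate \<Rightarrow> nat \<Rightarrow> real" where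
  "qnew r sp T \<delta> H sel st s' =
    (1 - ql_alpha H (n_of st (cur_of st) (det_act sel st) + 1)) * Q_of st (cur_of st) (det_act sel st)
     + ql_alpha H (n_of st (cur_of st) (det_act sel st) + 1) * (r (cur_of st) (det_act sel st) + (1 - 1/H) * V_of st s'
         + ql_bonus sp T \<delta> H (n_of st (cur_of st) (det_act sel st) + 1))"

lemma det_step_simps:
  "hist_of (det_step nA r sp T \<delta> H sel st s') = hist_of st @ [(cur_of st, det_act sel st)]"
  "cur_of (det_step nA r sp T \<delta> H sel st s') = s'"
  "n_of (det_step nA r sp T \<delta> H sel st s') = (n_of st)(cur_of st := (n_of st (cur_of st))(det_act sel st := n_of st (cur_of st) (det_act sel st) + 1))"
  "Q_of (det_step nA r sp T \<delta> H sel st s') = (Q_of st)(cur_of st := (Q_of st (cur_of st))(det_act sel st := qnew r sp T \<delta> H sel st s'))"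
  "Qh_of (det_step nA r sp T \<delta> H sel st s') = (Qh_of st)(cur_of st := (Qh_of st (cur_of st))(det_act sel st := min (Qh_of st (cur_of st) (det_act sel st)) (qnew r sp T \<delta> H sel st s')))"
  "V_of (det_step nA r sp T \<delta> H sel st s') = (V_of st)(cur_of st := Max ((\<lambda>b. Qh_of (det_step nA r sp T \<delta> H sel st s') (cur_of st) b) ` {..<nA}))"
  by (cases st; simp add: det_step_def det_act_def Let_def hist_of_def cur_of_def n_of_def Q_of_def Qh_of_def V_of_def qnew_def)+


lemma pmf_E_mono:
  fixes f g :: "'a \<Rightarrow> real"
  assumes "finite (set_pmf M)" "\<And>x. x \<in> set_pmf M \<Longrightarrow> f x \<le> g x"
  shows "measure_pmf.expectation M f \<le> measure_pmf.expectation M g"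
  by (rule integral_mono_AE) (auto simp: AE_measure_pmf_iff integrable_measure_pmf_finite assms)

lemma pmf_E_le_const:
  fixes f :: "'a \<Rightarrow> real"
  assumes "finite (set_pmf M)" "\<And>x. x \<in> set_pmf M \<Longrightarrow> f x \<le> c"
  shows "measure_pmf.expectation M f \<le> c"
  using pmf_E_mono[OF assms(1), of f "\<lambda>_. c"] assms(2) by simp

lemma pmf_E_ge_const:
  fixes f :: "'a \<Rightarrow> real"
  assumes "finite (set_pmf M)" "\<And>x. x \<in> set_pmf M \<Longrightarrow> c \<le> f x"
  shows "c \<le> measure_pmf.expectation M f"
  using pmf_E_mono[OF assms(1), of "\<lambda>_. c" f] assms(2) by simp

lemma pmf_E_add_const:
  fixes f :: "'a \<Rightarrow> real"
  assumes "finite (set_pmf M)"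
  shows "measure_pmf.expectation M (\<lambda>x. f x + c) = measure_pmf.expectation M f + c"
  by (subst Bochner_Integration.integral_add) (auto simp: integrable_measure_pmf_finite assms)

locale QL =
  fixes nS nA :: nat and r :: "nat \<Rightarrow> nat \<Rightarrow> real" and p :: "nat \<Rightarrow> nat \<Rightarrow> nat pmf"
    and J :: real and q :: "nat \<Rightarrow> nat \<Rightarrow> real" and s1 T :: nat and \<delta> H :: real
    and sel :: "(nat \<times> nat) list \<Rightarrow> nat \<Rightarrow> (nat \<Rightarrow> real) \<Rightarrow> nat"
  assumes wf: "mdp_wf nS nA r p" and bell: "bellman nS nA r p J q" and s1: "s1 < nS"
    and T1: "1 \<le> T" and d0: "0 < \<delta>" and d1: "\<delta> < 1"
    and selp: "\<forall>h s f. sel h s f < nA \<and> (\<forall>b<nA. f b \<le> f (sel h s f))"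
    and H2: "2 \<le> H" and sp_pos: "0 < span nS (vfun nA q)"
begin

abbreviation "sp \<equiv> span nS (vfun nA q)"
abbreviation "v \<equiv> vfun nA q"
definition "vmax = Max (v ` {..<nS})"
definition "vmin = Min (v ` {..<nS})"
definition "gam = 1 - 1/H"
definition "bon \<tau> = ql_bonus sp T \<delta> H \<tau>"
definition "W s = v s - vmax + H * J"
definition "Pv s a = measure_pmf.expectation (p s a) v"
definition "PW s a = measure_pmf.expectation (p s a) W"
definition "QW s a = r s a + gam * PW s a"

lemma nS_pos: "0 < nS" and nA_pos: "0 < nA"
  using wf by (auto simp: mdp_wf_def)

lemma r_bnd: "s < nS \<Longrightarrow> a < nA \<Longrightarrow> 0 \<le> r s a \<and> r s a \<le> 1"
  using wf by (auto simp: mdp_wf_def)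

lemma supp: "s < nS \<Longrightarrow> a < nA \<Longrightarrow> set_pmf (p s a) \<subseteq> {..<nS}"
  using wf by (auto simp: mdp_wf_def)

lemma supp_fin: "s < nS \<Longrightarrow> a < nA \<Longrightarrow> finite (set_pmf (p s a))"
  using supp finite_subset by blast

lemma supp_in: "s < nS \<Longrightarrow> a < nA \<Longrightarrow> x \<in> set_pmf (p s a) \<Longrightarrow> x < nS"
  using supp by blast

lemma H_pos: "H > 0" using H2 by simp

lemma gam_bnd: "0 \<le> gam" "gam \<le> 1" using H2 unfolding gam_def by auto

lemma v_le: "s < nS \<Longrightarrow> v s \<le> vmax"
  unfolding vmax_def by (rule Max_ge) auto

lemma v_ge: "s < nS \<Longrightarrow> vmin \<le> v s"
  unfolding vmin_def by (rule Min_le) auto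

lemma sp_eq: "sp = vmax - vmin"
  unfolding span_def vmax_def vmin_def ..

lemma q_le_v: "a < nA \<Longrightarrow> q s a \<le> v s"
  unfolding vfun_def by (rule Max_ge) auto

lemma v_attained: "\<exists>a<nA. q s a = v s"
proof -
  have "Max ((\<lambda>a. q s a) ` {..<nA}) \<in> (\<lambda>a. q s a) ` {..<nA}"
    by (rule Max_in) (use nA_pos in auto)
  then show ?thesis unfolding vfun_def by auto
qed

lemma bell_eq: "s < nS \<Longrightarrow> a < nA \<Longrightarrow> J + q s a = r s a + Pv s a"
  using bell unfolding bellman_def Pv_def by auto

lemma Pv_bnd: "s < nS \<Longrightarrow> a < nA \<Longrightarrow> vmin \<le> Pv s a \<and> Pv s a \<le> vmax"
  unfolding Pv_def using supp_fin supp_in v_le v_ge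
  by (auto intro!: pmf_E_le_const pmf_E_ge_const)

lemma J_bnd: "0 \<le> J \<and> J \<le> 1"
proof -
  obtain smax where smax: "smax < nS" "v smax = vmax"
  proof -
    have "vmax \<in> v ` {..<nS}" unfolding vmax_def by (rule Max_in) (use nS_pos in auto)
    then show ?thesis using that by auto
  qed
  obtain smin where smin: "smin < nS" "v smin = vmin"
  proof -
    have "vmin \<in> v ` {..<nS}" unfolding vmin_def by (rule Min_in) (use nS_pos in auto)
    then show ?thesis using that by auto
  qed
  obtain a1 where a1: "a1 < nA" "q smax a1 = v smax" using v_attained by blast
  obtain a2 where a2: "a2 < nA" "q smin a2 = v smin" using v_attained by blast
  have "J + vmax = r smax a1 + Pv smax a1" using bell_eq[OF smax(1) a1(1)] a1 smax by simp
  then have "J \<le> 1" using Pv_bnd[OF smax(1) a1(1)] r_bnd[OF smax(1) a1(1)] by linarith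
  moreover have "J + vmin = r smin a2 + Pv smin a2" using bell_eq[OF smin(1) a2(1)] a2 smin by simp
  then have "0 \<le> J" using Pv_bnd[OF smin(1) a2(1)] r_bnd[OF smin(1) a2(1)] by linarith
  ultimately show ?thesis by simp
qed

lemma W_bnd: "s < nS \<Longrightarrow> H * J - sp \<le> W s \<and> W s \<le> H * J"
  unfolding W_def sp_eq using v_le v_ge by auto

lemma PW_eq: "s < nS \<Longrightarrow> a < nA \<Longrightarrow> PW s a = Pv s a - vmax + H * J"
  unfolding PW_def Pv_def W_def
  using pmf_E_add_const[OF supp_fin, of s a v "- vmax + H * J"] by (simp add: algebra_simps)

lemma HJ_le: "H * J \<le> H" using J_bnd H_pos by (simp add: mult_left_le)

lemma QW_le: "s < nS \<Longrightarrow> a < nA \<Longrightarrow> QW s a \<le> H"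
proof -
  assume sa: "s < nS" "a < nA"
  have "PW s a \<le> H * J" using PW_eq[OF sa] Pv_bnd[OF sa] by simp
  then have "gam * PW s a \<le> gam * (H * J)" using gam_bnd by (simp add: mult_left_mono)
  also have "\<dots> = (H - 1) * J" unfolding gam_def using H_pos by (simp add: field_simps)
  also have "\<dots> \<le> H - 1" using J_bnd H2 by (simp add: mult_left_le)
  finally show ?thesis unfolding QW_def using r_bnd[OF sa] by simp
qed

lemma QW_ge: "s < nS \<Longrightarrow> a < nA \<Longrightarrow> - sp \<le> QW s a"
proof -
  assume sa: "s < nS" "a < nA"
  have "0 \<le> H * J" using J_bnd H_pos by simp
  then have "- sp \<le> PW s a" using PW_eq[OF sa] Pv_bnd[OF sa] sp_eq by linarith
  then have "gam * (- sp) \<le> gam * PW s a" using gam_bnd by (intro mult_left_mono) auto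
  moreover have "- sp \<le> gam * (- sp)" using gam_bnd sp_pos by (simp add: mult_left_le)
  ultimately show ?thesis unfolding QW_def using r_bnd[OF sa] by linarith
qed

lemma subsol: "s < nS \<Longrightarrow> a < nA \<Longrightarrow> q s a = v s \<Longrightarrow> W s \<le> QW s a"
proof -
  assume sa: "s < nS" "a < nA" and qa: "q s a = v s"
  have b: "r s a = J + v s - Pv s a" using bell_eq[OF sa] qa by simp
  have "QW s a = J + v s - Pv s a + (1 - 1/H) * (Pv s a - vmax + H * J)"
    unfolding QW_def gam_def PW_eq[OF sa] b ..
  also have "\<dots> = W s + (vmax - Pv s a) / H"
    unfolding W_def using H_pos by (simp add: field_simps)
  finally show ?thesis using Pv_bnd[OF sa] H_pos by simp
qed

end


context QL begin

fun drun :: "(nat \<Rightarrow> nat) \<Rightarrow> nat \<Rightarrow> qstate" where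
  "drun xs 0 = ql_init H (xs 0)"
| "drun xs (Suc t) = det_step nA r sp T \<delta> H sel (drun xs t) (xs (Suc t))"

lemma drun_cong: "(\<And>i. i \<le> k \<Longrightarrow> xs i = ys i) \<Longrightarrow> drun xs k = drun ys k"
  by (induction k) auto

end

locale QLT = QL +
  fixes xs :: "nat \<Rightarrow> nat"
  assumes xs_rng: "\<And>t. xs t < nS"
begin

definition "ds t = drun xs t"
definition "act t = det_act sel (ds t)"
definition "pr t = (xs t, act t)"
definition "nn t = n_of (ds t)"
definition "QQ t = Q_of (ds t)"
definition "Qh t = Qh_of (ds t)"
definition "VV t = V_of (ds t)"

fun cnt :: "nat \<Rightarrow> nat \<times> nat \<Rightarrow> nat" where
  "cnt 0 pp = 0"
| "cnt (Suc t) pp = cnt t pp + (if pr t = pp then 1 else 0)"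

definition "tau t = cnt t (pr t) + 1"
definition "y t = r (xs t) (act t) + gam * VV t (xs (Suc t)) + bon (tau t)"

lemma cur_ds: "cur_of (ds t) = xs t"
proof (cases t)
  case 0 then show ?thesis by (simp add: ds_def ql_init_def cur_of_def)
next
  case (Suc t') then show ?thesis by (simp add: ds_def det_step_simps)
qed

lemma ds_Suc: "ds (Suc t) = det_step nA r sp T \<delta> H sel (ds t) (xs (Suc t))"
  by (simp add: ds_def)

lemma hist_ds: "hist_of (ds t) = map pr [0..<t]"
proof (induction t)
  case 0 then show ?case by (simp add: ds_def ql_init_def hist_of_def)
next
  case (Suc t) then show ?case
    by (simp add: ds_Suc det_step_simps cur_ds pr_def act_def)
qed

lemma act_lt: "act t < nA"
  using selp unfolding act_def det_act_eq by auto

lemma act_greedy: "b < nA \<Longrightarrow> Qh t (xs t) b \<le> Qh t (xs t) (act t)"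
  using selp unfolding act_def det_act_eq Qh_def cur_ds by auto

lemma pr_rng: "pr t \<in> {..<nS} \<times> {..<nA}"
  using xs_rng act_lt unfolding pr_def by auto

lemma init_vals: "nn 0 s a = 0" "QQ 0 s a = H" "Qh 0 s a = H" "VV 0 s = H"
  by (simp_all add: nn_def QQ_def Qh_def VV_def ds_def ql_init_def n_of_def Q_of_def Qh_of_def V_of_def)

lemma nn_Suc: "nn (Suc t) s a = (if (s, a) = pr t then nn t s a + 1 else nn t s a)"
  by (simp add: nn_def ds_Suc det_step_simps cur_ds pr_def act_def)

lemma nn_cnt: "nn t s a = cnt t (s, a)"
  by (induction t) (auto simp: init_vals nn_Suc)

lemma QQ_Suc: "QQ (Suc t) s a = (if (s, a) = pr t then (1 - ql_alpha H (tau t)) * QQ t s a + ql_alpha H (tau t) * y t else QQ t s a)"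
  by (auto simp add: QQ_def ds_Suc det_step_simps cur_ds pr_def act_def[symmetric] qnew_def tau_def y_def
      nn_cnt[unfolded nn_def, symmetric] gam_def bon_def VV_def)

lemma Qh_Suc: "Qh (Suc t) s a = (if (s, a) = pr t then min (Qh t s a) (QQ (Suc t) s a) else Qh t s a)"
  by (auto simp add: Qh_def QQ_def ds_Suc det_step_simps cur_ds pr_def act_def[symmetric])

lemma VV_Suc: "VV (Suc t) s = (if s = xs t then Max ((\<lambda>b. Qh (Suc t) s b) ` {..<nA}) else VV t s)"
  by (auto simp add: VV_def Qh_def ds_Suc det_step_simps cur_ds)

end


context QLT begin

lemma Qh_Suc_other: "s \<noteq> xs t \<Longrightarrow> Qh (Suc t) s a = Qh t s a"
  by (simp add: Qh_Suc pr_def)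

lemma VV_max: "VV t s = Max ((\<lambda>b. Qh t s b) ` {..<nA})"
proof (induction t)
  case 0
  have "(\<lambda>b. Qh 0 s b) ` {..<nA} = {H}" using nA_pos by (auto simp: init_vals)
  then show ?case by (simp add: init_vals)
next
  case (Suc t)
  show ?case
  proof (cases "s = xs t")
    case True then show ?thesis by (simp add: VV_Suc)
  next
    case False then show ?thesis using Suc by (simp add: VV_Suc Qh_Suc_other)
  qed
qed

lemma Qh_le_QQ: "Qh t s a \<le> QQ t s a"
  by (induction t) (auto simp: init_vals Qh_Suc QQ_Suc)

lemma Qh_mono: "Qh (Suc t) s a \<le> Qh t s a"
  by (auto simp: Qh_Suc)

lemma Qh_le_H: "Qh t s a \<le> H"
proof (induction t)
  case 0 then show ?case by (simp add: init_vals)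
next
  case (Suc t) then show ?case using Qh_mono[of t s a] by linarith
qed

lemma Qh_le_VV: "a < nA \<Longrightarrow> Qh t s a \<le> VV t s"
  unfolding VV_max by (rule Max_ge) auto

lemma VV_mono: "VV (Suc t) s \<le> VV t s"
  unfolding VV_max
proof (rule Max.boundedI)
  fix x assume "x \<in> (\<lambda>b. Qh (Suc t) s b) ` {..<nA}"
  then obtain b where b: "b < nA" "x = Qh (Suc t) s b" by auto
  have "Qh (Suc t) s b \<le> Qh t s b" by (rule Qh_mono)
  also have "\<dots> \<le> Max ((\<lambda>b. Qh t s b) ` {..<nA})" by (rule Max_ge) (use b in auto)
  finally show "x \<le> Max ((\<lambda>b. Qh t s b) ` {..<nA})" using b by simp
qed (use nA_pos in auto)

lemma VV_le_H: "VV t s \<le> H"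
  unfolding VV_max by (rule Max.boundedI) (use nA_pos Qh_le_H in auto)

lemma VV_greedy: "VV t (xs t) = Qh t (xs t) (act t)"
proof (rule antisym)
  show "VV t (xs t) \<le> Qh t (xs t) (act t)"
    unfolding VV_max by (rule Max.boundedI) (use nA_pos act_greedy in auto)
  show "Qh t (xs t) (act t) \<le> VV t (xs t)" by (rule Qh_le_VV[OF act_lt])
qed

lemma cnt_mono: "i \<le> t \<Longrightarrow> cnt i pp \<le> cnt t pp"
proof (induction t rule: dec_induct)
  case (step t) then show ?case by simp
qed simp

lemma cnt_lt: "i < t \<Longrightarrow> pr i = pp \<Longrightarrow> cnt i pp < cnt t pp"
  using cnt_mono[of "Suc i" t pp] by simp

lemma cnt_le: "cnt t pp \<le> t"
  by (induction t) auto

lemma cnt_reindex: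
  assumes "a \<le> b"
  shows "(\<Sum>i\<in>{a..<b}. if pr i = pp then g (cnt i pp) else 0) = (\<Sum>j\<in>{cnt a pp..<cnt b pp}. g j)"
  using assms
proof (induction b rule: dec_induct)
  case base then show ?case by simp
next
  case (step b)
  have m: "cnt a pp \<le> cnt b pp" using cnt_mono[OF step(1)] .
  show ?case
  proof (cases "pr b = pp")
    case True
    have "(\<Sum>i\<in>{a..<Suc b}. if pr i = pp then g (cnt i pp) else 0)
        = (\<Sum>i\<in>{a..<b}. if pr i = pp then g (cnt i pp) else 0) + g (cnt b pp)"
      using step(1) True by simp
    also have "\<dots> = (\<Sum>j\<in>{cnt a pp..<cnt b pp}. g j) + g (cnt b pp)" using step by simp
    also have "\<dots> = (\<Sum>j\<in>{cnt a pp..<Suc (cnt b pp)}. g j)" using m by simp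
    finally show ?thesis using True by simp
  next
    case False
    then show ?thesis using step by simp
  qed
qed

lemma cnt_reindex0:
  "(\<Sum>i<b. if pr i = pp then g (cnt i pp) else 0) = (\<Sum>j<cnt b pp. g j)"
  using cnt_reindex[of 0 b pp g] by (simp add: atLeast0LessThan)

definition "WS t pp \<tau> z = (\<Sum>i<t. if pr i = pp then aw H (cnt i pp + 1) \<tau> * z i else 0)"

lemma WS_one: "WS t pp \<tau> (\<lambda>_. 1) = (\<Sum>j<cnt t pp. aw H (Suc j) \<tau>)"
proof -
  have "WS t pp \<tau> (\<lambda>_. 1) = (\<Sum>i<t. if pr i = pp then aw H (Suc (cnt i pp)) \<tau> else 0)"
    unfolding WS_def by (intro sum.cong) auto
  then show ?thesis using cnt_reindex0[where b=t and pp=pp and g="\<lambda>j. aw H (Suc j) \<tau>"] by metis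
qed


lemma WS_one_eq: "cnt t pp = \<tau> \<Longrightarrow> 1 \<le> \<tau> \<Longrightarrow> WS t pp \<tau> (\<lambda>_. 1) = 1"
  unfolding WS_one using aw_sum[OF H_pos] by simp

lemma WS_stable:
  assumes "\<tau> \<le> cnt t pp" "t \<le> t'"
  shows "WS t' pp \<tau> z = WS t pp \<tau> z"
proof -
  have "WS t' pp \<tau> z = WS t pp \<tau> z + (\<Sum>i\<in>{t..<t'}. if pr i = pp then aw H (cnt i pp + 1) \<tau> * z i else 0)"
    unfolding WS_def using assms(2)
    by (metis (no_types, lifting) atLeast0LessThan le0 sum.atLeastLessThan_concat)
  also have "(\<Sum>i\<in>{t..<t'}. if pr i = pp then aw H (cnt i pp + 1) \<tau> * z i else 0) = 0"
  proof (rule sum.neutral, intro ballI)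
    fix i assume "i \<in> {t..<t'}"
    then have "cnt t pp \<le> cnt i pp" using cnt_mono by auto
    then have "aw H (cnt i pp + 1) \<tau> = 0" using assms(1) by (intro aw_zero) simp
    then show "(if pr i = pp then aw H (cnt i pp + 1) \<tau> * z i else 0) = 0" by simp
  qed
  finally show ?thesis by simp
qed

lemma WS_zero: "WS t pp 0 z = 0"
  unfolding WS_def by (intro sum.neutral) auto

lemma QQ_formula: "QQ t (fst pp) (snd pp) = (if cnt t pp = 0 then H else WS t pp (cnt t pp) y)"
proof (induction t)
  case 0 then show ?case by (simp add: init_vals)
next
  case (Suc t)
  show ?case
  proof (cases "pr t = pp")
    case False
    then have c: "cnt (Suc t) pp = cnt t pp" by simp
    have q: "QQ (Suc t) (fst pp) (snd pp) = QQ t (fst pp) (snd pp)" using False by (simp add: QQ_Suc)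
    have w: "WS (Suc t) pp \<tau> y = WS t pp \<tau> y" for \<tau> using False by (simp add: WS_def)
    show ?thesis using Suc q w c by simp
  next
    case True
    define m where "m = cnt t pp"
    have c: "cnt (Suc t) pp = Suc m" using True m_def by simp
    have ta: "tau t = Suc m" unfolding tau_def using True m_def by simp
    have q: "QQ (Suc t) (fst pp) (snd pp) = (1 - ql_alpha H (Suc m)) * QQ t (fst pp) (snd pp) + ql_alpha H (Suc m) * y t"
      using True ta by (simp add: QQ_Suc)
    have "WS (Suc t) pp (Suc m) y = (\<Sum>i<t. if pr i = pp then aw H (cnt i pp + 1) (Suc m) * y i else 0) + ql_alpha H (Suc m) * y t"
      unfolding WS_def using True m_def by simp
    also have "(\<Sum>i<t. if pr i = pp then aw H (cnt i pp + 1) (Suc m) * y i else 0)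
        = (\<Sum>i<t. (1 - ql_alpha H (Suc m)) * (if pr i = pp then aw H (cnt i pp + 1) m * y i else 0))"
    proof (rule sum.cong)
      fix i assume "i \<in> {..<t}"
      then have "pr i = pp \<Longrightarrow> cnt i pp + 1 \<noteq> Suc m" using cnt_lt[of i t pp] m_def by auto
      then show "(if pr i = pp then aw H (cnt i pp + 1) (Suc m) * y i else 0)
           = (1 - ql_alpha H (Suc m)) * (if pr i = pp then aw H (cnt i pp + 1) m * y i else 0)"
        by auto
    qed simp
    also have "\<dots> = (1 - ql_alpha H (Suc m)) * WS t pp m y"
      unfolding WS_def by (simp add: sum_distrib_left)
    finally have w: "WS (Suc t) pp (Suc m) y = (1 - ql_alpha H (Suc m)) * WS t pp m y + ql_alpha H (Suc m) * y t" .
    show ?thesis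
    proof (cases "m = 0")
      case True
      have "1 - ql_alpha H (Suc 0) = 0" using H_pos by (simp add: ql_alpha_def)
      then show ?thesis using q w c True by simp
    next
      case False
      then show ?thesis using q w c Suc m_def by simp
    qed
  qed
qed

end


context QLT begin

definition "xi t = W (xs (Suc t)) - PW (xs t) (act t)"

definition "E1det \<longleftrightarrow> (\<forall>s<nS. \<forall>a<nA. \<forall>\<tau>. 1 \<le> \<tau> \<longrightarrow> \<tau> \<le> T \<longrightarrow> \<bar>WS T (s, a) \<tau> xi\<bar> \<le> bon \<tau>)"

lemma WS_add: "WS t pp \<tau> (\<lambda>i. f i + g i) = WS t pp \<tau> f + WS t pp \<tau> g"
  unfolding WS_def sum.distrib[symmetric] by (rule sum.cong) (auto simp: distrib_left)

lemma WS_cmult: "WS t pp \<tau> (\<lambda>i. c * f i) = c * WS t pp \<tau> f"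
  unfolding WS_def by (simp add: sum_distrib_left) (rule sum.cong; simp)

lemma WS_pairconst: "WS t pp \<tau> (\<lambda>i. g (pr i)) = g pp * WS t pp \<tau> (\<lambda>_. 1)"
  unfolding WS_def by (simp add: sum_distrib_left) (rule sum.cong; auto)

lemma WS_mono: "(\<And>i. i < t \<Longrightarrow> pr i = pp \<Longrightarrow> f i \<le> g i) \<Longrightarrow> WS t pp \<tau> f \<le> WS t pp \<tau> g"
  unfolding WS_def
  by (rule sum_mono) (auto intro!: mult_left_mono aw_nonneg[OF H_pos])

lemma WS_nonneg: "(\<And>i. i < t \<Longrightarrow> pr i = pp \<Longrightarrow> 0 \<le> f i) \<Longrightarrow> 0 \<le> WS t pp \<tau> f"
  using WS_mono[of t pp "\<lambda>_. 0" f \<tau>] by (simp add: WS_def cong: if_cong)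

lemma L_pos: "0 < ln (2 * real T / \<delta>)"
proof -
  have "1 < 2 * real T / \<delta>" using T1 d0 d1 by (simp add: field_simps)
  then show ?thesis by simp
qed

lemma bon_nonneg: "0 \<le> bon k"
  unfolding bon_def ql_bonus_def using sp_pos H_pos L_pos by simp

lemma bon_anti: "1 \<le> j \<Longrightarrow> j \<le> k \<Longrightarrow> bon k \<le> bon j"
proof -
  assume jk: "1 \<le> j" "j \<le> k"
  have "H / real k \<le> H / real j" using jk H_pos by (simp add: frac_le)
  then have "H / real k * ln (2 * real T / \<delta>) \<le> H / real j * ln (2 * real T / \<delta>)"
    using L_pos by (intro mult_right_mono) auto
  then have "sqrt (H / real k * ln (2 * real T / \<delta>)) \<le> sqrt (H / real j * ln (2 * real T / \<delta>))"
    by (rule real_sqrt_le_mono)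
  then show ?thesis unfolding bon_def ql_bonus_def by (rule mult_left_mono) (use sp_pos in auto)
qed

lemma y_minus_QW: "y i - QW (xs i) (act i) = gam * (VV i (xs (Suc i)) - W (xs (Suc i))) + gam * xi i + bon (tau i)"
  unfolding y_def QW_def xi_def by (simp add: algebra_simps)

lemma QQ_minus_QW:
  assumes "cnt t pp = \<tau>" "1 \<le> \<tau>" "pp = (s, a)"
  shows "QQ t s a - QW s a = gam * WS t pp \<tau> (\<lambda>i. VV i (xs (Suc i)) - W (xs (Suc i))) + gam * WS t pp \<tau> xi + WS t pp \<tau> (\<lambda>i. bon (tau i))"
proof -
  have "QQ t s a = WS t pp \<tau> y" using QQ_formula[of t pp] assms by simp
  moreover have "QW s a = WS t pp \<tau> (\<lambda>i. QW (fst (pr i)) (snd (pr i)))"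
    using WS_pairconst[of t pp \<tau> "\<lambda>x. QW (fst x) (snd x)"] WS_one_eq[OF assms(1,2)] assms(3) by simp
  moreover have "WS t pp \<tau> (\<lambda>i. y i + (-1) * QW (fst (pr i)) (snd (pr i))) = WS t pp \<tau> y + (-1) * WS t pp \<tau> (\<lambda>i. QW (fst (pr i)) (snd (pr i)))"
    by (simp only: WS_add WS_cmult)
  ultimately have 1: "QQ t s a - QW s a = WS t pp \<tau> (\<lambda>i. y i + (-1) * QW (fst (pr i)) (snd (pr i)))"
    by simp
  have fe: "(\<lambda>i. y i + (-1) * QW (fst (pr i)) (snd (pr i))) = (\<lambda>i. gam * (VV i (xs (Suc i)) - W (xs (Suc i))) + (gam * xi i + bon (tau i)))"
  proof (rule ext)
    fix i
    have "y i + (-1) * QW (fst (pr i)) (snd (pr i)) = y i - QW (xs i) (act i)" by (simp add: pr_def)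
    also have "\<dots> = gam * (VV i (xs (Suc i)) - W (xs (Suc i))) + gam * xi i + bon (tau i)" by (rule y_minus_QW)
    finally show "y i + (-1) * QW (fst (pr i)) (snd (pr i)) = gam * (VV i (xs (Suc i)) - W (xs (Suc i))) + (gam * xi i + bon (tau i))"
      by (simp add: add.assoc)
  qed
  show ?thesis unfolding 1 fe by (simp add: WS_add WS_cmult)
qed

lemma WS_bon_ge:
  assumes "cnt t pp = \<tau>" "1 \<le> \<tau>"
  shows "bon \<tau> \<le> WS t pp \<tau> (\<lambda>i. bon (tau i))"
proof -
  have "WS t pp \<tau> (\<lambda>_. bon \<tau>) \<le> WS t pp \<tau> (\<lambda>i. bon (tau i))"
  proof (rule WS_mono)
    fix i assume i: "i < t" "pr i = pp"
    have "tau i \<le> \<tau>" unfolding tau_def using cnt_lt[OF i] i assms by simp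
    then show "bon \<tau> \<le> bon (tau i)" by (intro bon_anti) (auto simp: tau_def)
  qed
  moreover have "WS t pp \<tau> (\<lambda>_. bon \<tau>) = bon \<tau>"
    using WS_cmult[of t pp \<tau> "bon \<tau>" "\<lambda>_. 1"] WS_one_eq[OF assms] by simp
  ultimately show ?thesis by simp
qed

definition "optQ t \<longleftrightarrow> (\<forall>s<nS. \<forall>a<nA. QW s a \<le> Qh t s a)"

lemma optV: "optQ t \<Longrightarrow> s < nS \<Longrightarrow> W s \<le> VV t s"
proof -
  assume o: "optQ t" and s: "s < nS"
  obtain b where b: "b < nA" "q s b = v s" using v_attained by blast
  have "W s \<le> QW s b" by (rule subsol[OF s b])
  also have "\<dots> \<le> Qh t s b" using o s b unfolding optQ_def by auto
  also have "\<dots> \<le> VV t s" by (rule Qh_le_VV[OF b(1)])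
  finally show ?thesis .
qed

lemma optimism:
  assumes E1: E1det
  shows "t \<le> T \<Longrightarrow> optQ t"
proof (induction t rule: less_induct)
  case (less t)
  show ?case
  proof (cases t)
    case 0 then show ?thesis unfolding optQ_def using QW_le by (simp add: init_vals)
  next
    case (Suc t0)
    have IH: "i \<le> t0 \<Longrightarrow> optQ i" for i using less Suc by auto
    show ?thesis unfolding optQ_def
    proof (intro allI impI)
      fix s a assume sa: "s < nS" "a < nA"
      show "QW s a \<le> Qh t s a"
      proof (cases "(s, a) = pr t0")
        case False
        then have "Qh t s a = Qh t0 s a" using Suc by (simp add: Qh_Suc)
        then show ?thesis using IH[of t0] sa unfolding optQ_def by auto
      next
        case True
        define pp where "pp = pr t0"
        define \<tau> where "\<tau> = cnt t pp"
        have tau1: "1 \<le> \<tau>" unfolding \<tau>_def pp_def Suc by simp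
        have tauT: "\<tau> \<le> T" unfolding \<tau>_def using cnt_le[of t pp] less by simp
        have pp: "pp = (s, a)" using True pp_def by simp
        have d: "QQ t s a - QW s a = gam * WS t pp \<tau> (\<lambda>i. VV i (xs (Suc i)) - W (xs (Suc i))) + gam * WS t pp \<tau> xi + WS t pp \<tau> (\<lambda>i. bon (tau i))"
          by (rule QQ_minus_QW[OF \<tau>_def[symmetric] tau1 pp])
        have "0 \<le> WS t pp \<tau> (\<lambda>i. VV i (xs (Suc i)) - W (xs (Suc i)))"
        proof (rule WS_nonneg)
          fix i assume "i < t" "pr i = pp"
          then have "optQ i" using IH Suc by simp
          then show "0 \<le> VV i (xs (Suc i)) - W (xs (Suc i))" using optV xs_rng by force
        qed
        then have t1: "0 \<le> gam * WS t pp \<tau> (\<lambda>i. VV i (xs (Suc i)) - W (xs (Suc i)))"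
          using gam_bnd by simp
        have "WS T pp \<tau> xi = WS t pp \<tau> xi" by (rule WS_stable) (use \<tau>_def less in auto)
        then have "- bon \<tau> \<le> WS t pp \<tau> xi" using E1 sa tau1 tauT unfolding E1det_def pp by fastforce
        then have t2: "- bon \<tau> \<le> gam * WS t pp \<tau> xi"
        proof -
          assume h: "- bon \<tau> \<le> WS t pp \<tau> xi"
          have "gam * (- bon \<tau>) \<le> gam * WS t pp \<tau> xi" using h gam_bnd by (intro mult_left_mono) auto
          moreover have "gam * bon \<tau> \<le> bon \<tau>" using gam_bnd bon_nonneg[of \<tau>] by (intro mult_left_le_one_le) auto
          then have "- bon \<tau> \<le> gam * (- bon \<tau>)" by simp
          ultimately show ?thesis by linarith
        qed
        have t3: "bon \<tau> \<le> WS t pp \<tau> (\<lambda>i. bon (tau i))" by (rule WS_bon_ge[OF \<tau>_def[symmetric] tau1])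
        have "QW s a \<le> QQ t s a" using d t1 t2 t3 by linarith
        moreover have "QW s a \<le> Qh t0 s a" using IH[of t0] sa unfolding optQ_def by auto
        moreover have "Qh t s a = min (Qh t0 s a) (QQ t s a)" using True Suc by (simp add: Qh_Suc)
        ultimately show ?thesis by simp
      qed
    qed
  qed
qed

end


lemma sum_triangle_swap:
  fixes f :: "nat \<Rightarrow> nat \<Rightarrow> real"
  shows "(\<Sum>t<T. \<Sum>i<t. f i t) = (\<Sum>i<T. \<Sum>t\<in>{Suc i..<T}. f i t)"
proof (induction T)
  case 0 then show ?case by simp
next
  case (Suc T)
  have "(\<Sum>i<Suc T. \<Sum>t\<in>{Suc i..<Suc T}. f i t) = (\<Sum>i<T. \<Sum>t\<in>{Suc i..<Suc T}. f i t)"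
    by simp
  also have "\<dots> = (\<Sum>i<T. (\<Sum>t\<in>{Suc i..<T}. f i t) + f i T)"
    by (rule sum.cong) auto
  also have "\<dots> = (\<Sum>i<T. \<Sum>t\<in>{Suc i..<T}. f i t) + (\<Sum>i<T. f i T)"
    by (simp add: sum.distrib)
  finally show ?case using Suc by simp
qed

context QLT begin

definition "Zs t z = WS t (pr t) (cnt t (pr t)) z"
definition "Dl i = VV i (xs (Suc i)) - W (xs (Suc i))"
definition "c0 t = (if cnt t (pr t) = 0 then H + sp else bon (cnt t (pr t)))"

lemma D_bound:
  assumes E1: E1det and t: "t < T"
  shows "Qh t (xs t) (act t) - QW (xs t) (act t) \<le> c0 t + gam * Zs t Dl + Zs t (\<lambda>i. bon (tau i))"
proof (cases "cnt t (pr t) = 0")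
  case True
  have "Qh t (xs t) (act t) - QW (xs t) (act t) \<le> QQ t (xs t) (act t) - QW (xs t) (act t)"
    using Qh_le_QQ by simp
  also have "QQ t (xs t) (act t) = H" using QQ_formula[of t "pr t"] True by (simp add: pr_def)
  finally have "Qh t (xs t) (act t) - QW (xs t) (act t) \<le> H + sp"
    using QW_ge[OF xs_rng act_lt, of t t] by simp
  then show ?thesis using True by (simp add: c0_def Zs_def WS_zero)
next
  case False
  define \<tau> where "\<tau> = cnt t (pr t)"
  have tau1: "1 \<le> \<tau>" using False \<tau>_def by simp
  have tauT: "\<tau> \<le> T" unfolding \<tau>_def using cnt_le[of t "pr t"] t by simp
  have d: "QQ t (xs t) (act t) - QW (xs t) (act t) = gam * WS t (pr t) \<tau> Dl + gam * WS t (pr t) \<tau> xi + WS t (pr t) \<tau> (\<lambda>i. bon (tau i))"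
    using QQ_minus_QW[OF \<tau>_def[symmetric] tau1, of "xs t" "act t"] unfolding Dl_def by (simp add: pr_def)
  have "WS T (pr t) \<tau> xi = WS t (pr t) \<tau> xi" by (rule WS_stable) (use \<tau>_def t in auto)
  moreover have "\<bar>WS T (xs t, act t) \<tau> xi\<bar> \<le> bon \<tau>"
    using E1 xs_rng[of t] act_lt[of t] tau1 tauT unfolding E1det_def by blast
  ultimately have "\<bar>WS t (pr t) \<tau> xi\<bar> \<le> bon \<tau>" unfolding pr_def by simp
  then have "gam * WS t (pr t) \<tau> xi \<le> bon \<tau>"
  proof -
    assume h: "\<bar>WS t (pr t) \<tau> xi\<bar> \<le> bon \<tau>"
    have "gam * WS t (pr t) \<tau> xi \<le> gam * \<bar>WS t (pr t) \<tau> xi\<bar>" using gam_bnd by (intro mult_left_mono) auto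
    also have "\<dots> \<le> \<bar>WS t (pr t) \<tau> xi\<bar>" using gam_bnd by (intro mult_left_le_one_le) auto
    finally show ?thesis using h by linarith
  qed
  moreover have "Qh t (xs t) (act t) \<le> QQ t (xs t) (act t)" by (rule Qh_le_QQ)
  ultimately show ?thesis using d False unfolding c0_def Zs_def \<tau>_def by simp
qed

lemma Zs_swap:
  assumes nn: "\<And>i. i < T \<Longrightarrow> 0 \<le> z i"
  shows "(\<Sum>t<T. Zs t z) \<le> (1 + 1/H) * (\<Sum>i<T. z i)"
proof -
  have "(\<Sum>t<T. Zs t z) = (\<Sum>t<T. \<Sum>i<t. if pr i = pr t then aw H (cnt i (pr t) + 1) (cnt t (pr t)) * z i else 0)"
    unfolding Zs_def WS_def ..
  also have "\<dots> = (\<Sum>i<T. \<Sum>t\<in>{Suc i..<T}. if pr i = pr t then aw H (cnt i (pr t) + 1) (cnt t (pr t)) * z i else 0)"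
    by (rule sum_triangle_swap)
  also have "\<dots> = (\<Sum>i<T. z i * (\<Sum>t\<in>{Suc i..<T}. if pr t = pr i then aw H (cnt (Suc i) (pr i)) (cnt t (pr i)) else 0))"
    by (rule sum.cong) (auto simp: sum_distrib_left intro!: sum.cong)
  also have "\<dots> \<le> (\<Sum>i<T. z i * (1 + 1/H))"
  proof (rule sum_mono)
    fix i assume i: "i \<in> {..<T}"
    have "(\<Sum>t\<in>{Suc i..<T}. if pr t = pr i then aw H (cnt (Suc i) (pr i)) (cnt t (pr i)) else 0)
        = (\<Sum>j\<in>{cnt (Suc i) (pr i)..<cnt T (pr i)}. aw H (cnt (Suc i) (pr i)) j)"
      by (rule cnt_reindex) (use i in auto)
    also have "\<dots> \<le> 1 + 1/H" by (rule aw_tail_le[OF H_pos]) simp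
    finally show "z i * (\<Sum>t\<in>{Suc i..<T}. if pr t = pr i then aw H (cnt (Suc i) (pr i)) (cnt t (pr i)) else 0) \<le> z i * (1 + 1/H)"
      by (rule mult_left_mono) (use nn i in auto)
  qed
  also have "\<dots> = (\<Sum>i<T. z i) * (1 + 1/H)" by (rule sum_distrib_right[symmetric])
  also have "\<dots> = (1 + 1/H) * (\<Sum>i<T. z i)" by (rule mult.commute)
  finally show ?thesis .
qed

end


lemma sum_inv_sqrt: "(\<Sum>j<N. 1 / sqrt (real (Suc j))) \<le> 2 * sqrt (real N)"
proof (induction N)
  case 0 then show ?case by simp
next
  case (Suc N)
  define a where "a = sqrt (real N)"
  define b where "b = sqrt (real (Suc N))"
  have b0: "b > 0" unfolding b_def by simp
  have ab: "a \<le> b" unfolding a_def b_def by simp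
  have a0: "0 \<le> a" unfolding a_def by simp
  have sq: "b * b - a * a = 1" unfolding a_def b_def by simp
  have "2 * a * b \<le> a * a + b * b" using sum_squares_bound[of a b] by (simp add: power2_eq_square)
  then have "1 \<le> 2 * b * (b - a)" using sq by (simp add: algebra_simps)
  then have "1 / b \<le> 2 * (b - a)" using b0 by (simp add: field_simps)
  then have "2 * a + 1 / b \<le> 2 * b" by simp
  moreover have "(\<Sum>j<Suc N. 1 / sqrt (real (Suc j))) = (\<Sum>j<N. 1 / sqrt (real (Suc j))) + 1 / b"
    unfolding b_def by simp
  ultimately show ?case using Suc unfolding a_def b_def by simp
qed

context QLT begin

abbreviation "PP \<equiv> {..<nS} \<times> {..<nA}"

lemma sum_by_pairs: "(\<Sum>t<T'. f t) = (\<Sum>pp\<in>PP. \<Sum>t<T'. if pr t = pp then f t else 0)"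
proof -
  have "(\<Sum>pp\<in>PP. \<Sum>t<T'. if pr t = pp then f t else 0) = (\<Sum>t<T'. \<Sum>pp\<in>PP. if pr t = pp then f t else 0)"
    by (rule sum.swap)
  also have "\<dots> = (\<Sum>t<T'. f t)"
    by (rule sum.cong) (use pr_rng in auto)
  finally show ?thesis by simp
qed

definition "gb j = (if j = 0 then H + sp else bon j)"

lemma gb_sum_exact: "(\<Sum>j<Suc N. gb j) = H + sp + (\<Sum>j<N. bon (Suc j))"
  by (induction N) (simp_all add: gb_def)

lemma gb_sum: "(\<Sum>j<N. gb j) \<le> H + sp + (\<Sum>j<N. bon (Suc j))"
proof (cases N)
  case 0 then show ?thesis using H_pos sp_pos by simp
next
  case (Suc N')
  have "(\<Sum>j<N'. bon (Suc j)) \<le> (\<Sum>j<Suc N'. bon (Suc j))" using bon_nonneg by simp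
  then show ?thesis using gb_sum_exact[of N'] Suc by simp
qed

lemma bon_Suc: "bon (Suc j) = 4 * sp * sqrt (H * ln (2 * real T / \<delta>)) * (1 / sqrt (real (Suc j)))"
proof -
  have "H / real (Suc j) * ln (2 * real T / \<delta>) = (H * ln (2 * real T / \<delta>)) / real (Suc j)" by simp
  then show ?thesis unfolding bon_def ql_bonus_def by (simp add: real_sqrt_divide)
qed

definition "LL = ln (2 * real T / \<delta>)"

lemma LL_pos: "0 < LL" unfolding LL_def by (rule L_pos)

lemma sqHL_nonneg: "0 \<le> sp * sqrt (H * LL)" using sp_pos H_pos LL_pos by simp

lemma bon_sum: "(\<Sum>j<N. bon (Suc j)) \<le> 8 * sp * sqrt (H * LL) * sqrt (real N)"
proof -
  have "(\<Sum>j<N. bon (Suc j)) = 4 * sp * sqrt (H * LL) * (\<Sum>j<N. 1 / sqrt (real (Suc j)))"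
    unfolding bon_Suc LL_def by (simp add: sum_distrib_left)
  also have "\<dots> \<le> 4 * sp * sqrt (H * LL) * (2 * sqrt (real N))"
    by (rule mult_left_mono[OF sum_inv_sqrt]) (use sqHL_nonneg in simp)
  finally show ?thesis by simp
qed

definition "BB = (\<Sum>pp\<in>PP. \<Sum>j<cnt T pp. bon (Suc j))"

lemma cnt_total: "(\<Sum>pp\<in>PP. real (cnt T' pp)) = real T'"
proof -
  have "real T' = (\<Sum>t<T'. (1::real))" by simp
  also have "\<dots> = (\<Sum>pp\<in>PP. \<Sum>t<T'. if pr t = pp then 1 else 0)" by (rule sum_by_pairs)
  also have "\<dots> = (\<Sum>pp\<in>PP. real (cnt T' pp))"
    using cnt_reindex0[where g="\<lambda>_. (1::real)"] by simp
  finally show ?thesis by simp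
qed

lemma BB_bound: "BB \<le> 8 * sp * sqrt (H * LL) * sqrt (real (nS * nA) * real T)"
proof -
  have "BB \<le> (\<Sum>pp\<in>PP. 8 * sp * sqrt (H * LL) * sqrt (real (cnt T pp)))"
    unfolding BB_def by (rule sum_mono) (rule bon_sum)
  also have "\<dots> = 8 * sp * sqrt (H * LL) * (\<Sum>pp\<in>PP. sqrt (real (cnt T pp)))"
    by (simp add: sum_distrib_left)
  also have "(\<Sum>pp\<in>PP. sqrt (real (cnt T pp))) \<le> sqrt (real (nS * nA) * real T)"
  proof -
    have "(\<Sum>pp\<in>PP. sqrt (real (cnt T pp)))\<^sup>2 \<le> (\<Sum>pp\<in>PP. (sqrt (real (cnt T pp)))\<^sup>2) * card PP"
      by (rule sum_squared_le_sum_of_squares)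
    also have "\<dots> = real T * real (nS * nA)" using cnt_total[of T] by (simp add: card_cartesian_product)
    finally have "(\<Sum>pp\<in>PP. sqrt (real (cnt T pp)))\<^sup>2 \<le> real (nS * nA) * real T" by (simp add: mult.commute)
    moreover have "0 \<le> (\<Sum>pp\<in>PP. sqrt (real (cnt T pp)))" by (rule sum_nonneg) simp
    ultimately show ?thesis by (metis real_le_rsqrt)
  qed
  then have "8 * sp * sqrt (H * LL) * (\<Sum>pp\<in>PP. sqrt (real (cnt T pp))) \<le> 8 * sp * sqrt (H * LL) * sqrt (real (nS * nA) * real T)"
    by (rule mult_left_mono) (use sqHL_nonneg in simp)
  finally show ?thesis .
qed

lemma c0_sum: "(\<Sum>t<T. c0 t) \<le> real (nS * nA) * (H + sp) + BB"
proof -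
  have "(\<Sum>t<T. c0 t) = (\<Sum>pp\<in>PP. \<Sum>t<T. if pr t = pp then c0 t else 0)" by (rule sum_by_pairs)
  also have "\<dots> = (\<Sum>pp\<in>PP. \<Sum>t<T. if pr t = pp then gb (cnt t pp) else 0)"
    by (intro sum.cong refl) (auto simp: c0_def gb_def)
  also have "\<dots> = (\<Sum>pp\<in>PP. \<Sum>j<cnt T pp. gb j)"
    by (intro sum.cong refl cnt_reindex0)
  also have "\<dots> \<le> (\<Sum>pp\<in>PP. H + sp + (\<Sum>j<cnt T pp. bon (Suc j)))"
    by (intro sum_mono gb_sum)
  also have "\<dots> = real (nS * nA) * (H + sp) + BB"
    unfolding BB_def by (simp add: sum.distrib card_cartesian_product)
  finally show ?thesis .
qed

lemma bontau_sum: "(\<Sum>i<T. bon (tau i)) = BB"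
proof -
  have "(\<Sum>i<T. bon (tau i)) = (\<Sum>pp\<in>PP. \<Sum>t<T. if pr t = pp then bon (tau t) else 0)" by (rule sum_by_pairs)
  also have "\<dots> = (\<Sum>pp\<in>PP. \<Sum>t<T. if pr t = pp then bon (Suc (cnt t pp)) else 0)"
    by (intro sum.cong refl) (auto simp: tau_def)
  also have "\<dots> = BB" unfolding BB_def
    by (intro sum.cong refl cnt_reindex0)
  finally show ?thesis .
qed

end


context QLT begin

definition "Ee t = VV t (xs t) - W (xs t)"

lemma Dl_sum:
  assumes E1: E1det
  shows "(\<Sum>i<T. Dl i) \<le> (\<Sum>t<T. Ee t) + (real nS + 1) * (H + sp)"
proof -
  have opt: "t \<le> T \<Longrightarrow> optQ t" for t by (rule optimism[OF E1])
  have Wlow: "s < nS \<Longrightarrow> - sp \<le> W s" for s using W_bnd[of s] J_bnd H_pos by (smt (verit) mult_nonneg_nonneg)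
  have split: "Dl i = Ee (Suc i) + (VV i (xs (Suc i)) - VV (Suc i) (xs (Suc i)))" for i
    unfolding Dl_def Ee_def by simp
  have s1: "(\<Sum>i<T. Ee (Suc i)) = (\<Sum>t<T. Ee t) + Ee T - Ee 0"
    using sum.lessThan_Suc_shift[of Ee T] by simp
  have e0: "0 \<le> Ee 0" unfolding Ee_def using optV[OF opt[of 0] xs_rng] by simp
  have eT: "Ee T \<le> H + sp" unfolding Ee_def using VV_le_H[of T "xs T"] Wlow[OF xs_rng] by smt
  have d1: "VV i (xs (Suc i)) - VV (Suc i) (xs (Suc i)) \<le> (\<Sum>s<nS. VV i s - VV (Suc i) s)" for i
    by (rule member_le_sum) (use xs_rng VV_mono in \<open>auto simp: algebra_simps\<close>)
  have "(\<Sum>i<T. \<Sum>s<nS. VV i s - VV (Suc i) s) = (\<Sum>s<nS. \<Sum>i<T. VV i s - VV (Suc i) s)"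
    by (rule sum.swap)
  also have "\<dots> = (\<Sum>s<nS. VV 0 s - VV T s)"
    by (intro sum.cong refl) (rule sum_lessThan_telescope')
  also have "\<dots> \<le> (\<Sum>s<nS. H + sp)"
  proof (rule sum_mono)
    fix s assume "s \<in> {..<nS}"
    then have "W s \<le> VV T s" "- sp \<le> W s" using optV[OF opt[of T]] Wlow by auto
    then show "VV 0 s - VV T s \<le> H + sp" by (simp add: init_vals)
  qed
  also have "\<dots> = real nS * (H + sp)" by simp
  moreover have "(\<Sum>i<T. VV i (xs (Suc i)) - VV (Suc i) (xs (Suc i))) \<le> (\<Sum>i<T. \<Sum>s<nS. VV i s - VV (Suc i) s)"
    by (rule sum_mono) (rule d1)
  ultimately have s2: "(\<Sum>i<T. VV i (xs (Suc i)) - VV (Suc i) (xs (Suc i))) \<le> real nS * (H + sp)"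
    by linarith
  have "(\<Sum>i<T. Dl i) = (\<Sum>i<T. Ee (Suc i)) + (\<Sum>i<T. VV i (xs (Suc i)) - VV (Suc i) (xs (Suc i)))"
    unfolding split by (rule sum.distrib)
  then show ?thesis using s1 s2 e0 eT by (simp add: algebra_simps)
qed

lemma G_bound:
  assumes E1: E1det
  shows "(\<Sum>t<T. W (xs t) - QW (xs t) (act t)) \<le> (real (nS * nA) + real nS + 1) * (H + sp) + 3 * BB"
proof -
  have opt: "t \<le> T \<Longrightarrow> optQ t" for t by (rule optimism[OF E1])
  define Y where "Y = (\<Sum>t<T. Ee t)"
  define G where "G = (\<Sum>t<T. W (xs t) - QW (xs t) (act t))"
  have Y0: "0 \<le> Y" unfolding Y_def Ee_def
    by (rule sum_nonneg) (use optV[OF opt xs_rng] in auto)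
  have Dl0: "i < T \<Longrightarrow> 0 \<le> Dl i" for i unfolding Dl_def using optV[OF opt[of i] xs_rng] by simp
  have DlS0: "0 \<le> (\<Sum>i<T. Dl i)" by (rule sum_nonneg) (use Dl0 in auto)
  have "Y + G = (\<Sum>t<T. Qh t (xs t) (act t) - QW (xs t) (act t))"
    unfolding Y_def G_def Ee_def sum.distrib[symmetric] using VV_greedy by (intro sum.cong) auto
  also have "\<dots> \<le> (\<Sum>t<T. c0 t + gam * Zs t Dl + Zs t (\<lambda>i. bon (tau i)))"
    by (rule sum_mono) (use D_bound[OF E1] in auto)
  also have "\<dots> = (\<Sum>t<T. c0 t) + gam * (\<Sum>t<T. Zs t Dl) + (\<Sum>t<T. Zs t (\<lambda>i. bon (tau i)))"
    by (simp add: sum.distrib sum_distrib_left)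
  also have "\<dots> \<le> (real (nS * nA) * (H + sp) + BB) + gam * ((1 + 1/H) * (\<Sum>i<T. Dl i)) + (1 + 1/H) * BB"
  proof -
    have "gam * (\<Sum>t<T. Zs t Dl) \<le> gam * ((1 + 1/H) * (\<Sum>i<T. Dl i))"
      by (rule mult_left_mono[OF Zs_swap]) (use Dl0 gam_bnd in auto)
    moreover have "(\<Sum>t<T. Zs t (\<lambda>i. bon (tau i))) \<le> (1 + 1/H) * BB"
      using Zs_swap[of "\<lambda>i. bon (tau i)"] bon_nonneg bontau_sum by simp
    ultimately show ?thesis using c0_sum by linarith
  qed
  also have "gam * ((1 + 1/H) * (\<Sum>i<T. Dl i)) \<le> (\<Sum>i<T. Dl i)"
  proof -
    have "gam * (1 + 1/H) = 1 - 1 / H^2" unfolding gam_def using H_pos by (simp add: field_simps power2_eq_square)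
    moreover have "1 * 1 \<le> H * H" by (rule mult_mono) (use H2 in auto)
    then have "0 \<le> 1 - 1 / H^2" "1 - 1 / H^2 \<le> 1" using H2 by (auto simp: field_simps power2_eq_square)
    ultimately show ?thesis using DlS0 by (metis mult.assoc mult_left_le_one_le)
  qed
  also have "(\<Sum>i<T. Dl i) \<le> Y + (real nS + 1) * (H + sp)" unfolding Y_def by (rule Dl_sum[OF E1])
  finally have "Y + G \<le> real (nS * nA) * (H + sp) + BB + (Y + (real nS + 1) * (H + sp)) + (1 + 1 / H) * BB"
    by simp
  moreover have "(1 + 1/H) * BB \<le> 2 * BB"
  proof -
    have "0 \<le> BB" unfolding BB_def by (intro sum_nonneg) (use bon_nonneg in auto)
    moreover have "1/H \<le> 1" using H2 by simp
    moreover have "BB * 1 \<le> BB * H" using \<open>0 \<le> BB\<close> H2 by (intro mult_left_mono) auto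
    then have "BB / H \<le> BB" using H2 by (simp add: divide_le_eq)
    ultimately show ?thesis by (simp add: algebra_simps)
  qed
  ultimately have "G \<le> (real (nS * nA) + real nS + 1) * (H + sp) + 3 * BB"
    by (simp add: algebra_simps)
  then show ?thesis unfolding G_def .
qed

theorem det_regret:
  assumes E1: E1det and E2: "(\<Sum>t<T. - xi t) \<le> x2" and x2: "0 \<le> x2"
  shows "(\<Sum>t<T. J - r (xs t) (act t)) \<le> real T * sp / H + (real (nS * nA) + real nS + 1) * (H + sp) + 3 * BB + x2 + sp"
proof -
  have ident: "J - r (xs t) (act t) = (J - W (xs t) / H) + (W (xs t) - QW (xs t) (act t)) + gam * (- xi t) + gam * (W (xs (Suc t)) - W (xs t))" for t
    unfolding QW_def xi_def gam_def using H_pos by (simp add: field_simps)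
  have "(\<Sum>t<T. J - r (xs t) (act t)) = (\<Sum>t<T. (J - W (xs t) / H) + (W (xs t) - QW (xs t) (act t)) + gam * (- xi t) + gam * (W (xs (Suc t)) - W (xs t)))"
    by (rule sum.cong[OF refl ident])
  also have "\<dots> = (\<Sum>t<T. J - W (xs t) / H) + (\<Sum>t<T. W (xs t) - QW (xs t) (act t))
      + (\<Sum>t<T. gam * (- xi t)) + (\<Sum>t<T. gam * (W (xs (Suc t)) - W (xs t)))"
    by (simp only: sum.distrib)
  also have "\<dots> = (\<Sum>t<T. J - W (xs t) / H) + (\<Sum>t<T. W (xs t) - QW (xs t) (act t))
      + gam * (\<Sum>t<T. - xi t) + gam * (\<Sum>t<T. W (xs (Suc t)) - W (xs t))"
    by (simp only: sum_distrib_left)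
  also have "(\<Sum>t<T. W (xs (Suc t)) - W (xs t)) = W (xs T) - W (xs 0)" by (rule sum_lessThan_telescope)
  also have "(\<Sum>t<T. J - W (xs t) / H) \<le> (\<Sum>t<T. sp / H)"
  proof (rule sum_mono)
    fix t
    have "J - W (xs t) / H = (vmax - v (xs t)) / H" unfolding W_def using H_pos by (simp add: field_simps)
    also have "\<dots> \<le> sp / H" using v_ge[OF xs_rng] sp_eq H_pos by (simp add: divide_right_mono)
    finally show "J - W (xs t) / H \<le> sp / H" .
  qed
  also have "gam * (\<Sum>t<T. - xi t) \<le> x2"
  proof -
    have "gam * (\<Sum>t<T. - xi t) \<le> gam * x2" using E2 gam_bnd by (intro mult_left_mono) auto
    also have "\<dots> \<le> x2" using gam_bnd x2 by (intro mult_left_le_one_le) auto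
    finally show ?thesis .
  qed
  also have "gam * (W (xs T) - W (xs 0)) \<le> sp"
  proof -
    have d: "W (xs T) - W (xs 0) \<le> sp" using W_bnd[OF xs_rng, of T] W_bnd[OF xs_rng, of 0] by simp
    show ?thesis
    proof (cases "0 \<le> W (xs T) - W (xs 0)")
      case True
      then have "gam * (W (xs T) - W (xs 0)) \<le> W (xs T) - W (xs 0)" using gam_bnd by (intro mult_left_le_one_le) auto
      then show ?thesis using d by simp
    next
      case False
      then have "gam * (W (xs T) - W (xs 0)) \<le> 0" using gam_bnd by (simp add: mult_nonneg_nonpos)
      then show ?thesis using sp_pos by simp
    qed
  qed
  also have "(\<Sum>t<T. W (xs t) - QW (xs t) (act t)) \<le> (real (nS * nA) + real nS + 1) * (H + sp) + 3 * BB"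
    by (rule G_bound[OF E1])
  finally show ?thesis by simp
qed

end


lemma pmf_hoeff_nn:
  fixes M :: "'a pmf" and f :: "'a \<Rightarrow> real"
  assumes rng: "\<And>x. x \<in> set_pmf M \<Longrightarrow> a \<le> f x \<and> f x \<le> b"
  shows "(\<integral>\<^sup>+x. ennreal (exp (l * (f x - measure_pmf.expectation M f))) \<partial>M) \<le> ennreal (exp (l\<^sup>2 * (b - a)\<^sup>2 / 8))"
proof (cases "l > 0")
  case True
  interpret interval_bounded_random_variable "measure_pmf M" f a b
    by unfold_locales (auto simp: AE_measure_pmf_iff rng)
  show ?thesis by (rule Hoeffdings_lemma_nn_integral[OF True])
next
  case False
  show ?thesis
  proof (cases "l = 0")
    case True then show ?thesis by (simp add: emeasure_pmf)
  next
    case False2: False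
    then have l: "- l > 0" using False by simp
    interpret interval_bounded_random_variable "measure_pmf M" "\<lambda>x. - f x" "- b" "- a"
      by unfold_locales (auto simp: AE_measure_pmf_iff rng)
    have "(\<integral>\<^sup>+x. ennreal (exp ((- l) * (- f x - measure_pmf.expectation M (\<lambda>x. - f x)))) \<partial>M) \<le> ennreal (exp ((- l)\<^sup>2 * (- a - - b)\<^sup>2 / 8))"
      by (rule Hoeffdings_lemma_nn_integral[OF l])
    moreover have "measure_pmf.expectation M (\<lambda>x. - f x) = - measure_pmf.expectation M f" by simp
    ultimately show ?thesis by (simp add: algebra_simps power2_commute)
  qed
qed

context QL begin

lemma cur_drun: "cur_of (drun xs t) = xs t"
proof (cases t)
  case 0 then show ?thesis by (simp add: ql_init_def cur_of_def)
next
  case (Suc t') then show ?thesis by (simp add: det_step_simps)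
qed

lemma reach:
  "st \<in> set_pmf (ql_run nA r p sp T \<delta> H sel s1 k) \<Longrightarrow> \<exists>xs. (\<forall>t. xs t < nS) \<and> st = drun xs k"
proof (induction k arbitrary: st)
  case 0
  then have "st = drun (\<lambda>_. s1) 0" by simp
  then show ?case using s1 by (intro exI[of _ "\<lambda>_. s1"]) auto
next
  case (Suc k)
  from Suc.prems obtain st0 where st0: "st0 \<in> set_pmf (ql_run nA r p sp T \<delta> H sel s1 k)"
    and st: "st \<in> set_pmf (ql_step nA r p sp T \<delta> H sel st0)" by auto
  obtain xs where xs: "\<forall>t. xs t < nS" "st0 = drun xs k" using Suc.IH[OF st0] by blast
  from st obtain s' where s': "s' \<in> set_pmf (p (cur_of st0) (det_act sel st0))"
    and st_eq: "st = det_step nA r sp T \<delta> H sel st0 s'"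
    unfolding ql_step_eq cur_of_def by auto
  have c: "cur_of st0 < nS" using xs cur_drun by simp
  have a: "det_act sel st0 < nA" using selp unfolding det_act_eq by auto
  have s'n: "s' < nS" using supp_in[OF c a s'] .
  define ys where "ys = xs(Suc k := s')"
  have "drun ys k = drun xs k" by (rule drun_cong) (auto simp: ys_def)
  then have "st = drun ys (Suc k)" using st_eq xs by (simp add: ys_def)
  moreover have "\<forall>t. ys t < nS" using xs s'n by (simp add: ys_def)
  ultimately show ?case by blast
qed

definition "trj st i = (if i < length (hist_of st) then fst (hist_of st ! i) else cur_of st)"

definition Xc :: "((nat \<times> nat) list \<Rightarrow> nat \<times> nat \<Rightarrow> real) \<Rightarrow> qstate \<Rightarrow> real" where
  "Xc c st = (\<Sum>i<length (hist_of st). c (take i (hist_of st)) (hist_of st ! i) *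
      (W (trj st (Suc i)) - PW (fst (hist_of st ! i)) (snd (hist_of st ! i))))"

definition Vc :: "((nat \<times> nat) list \<Rightarrow> nat \<times> nat \<Rightarrow> real) \<Rightarrow> qstate \<Rightarrow> real" where
  "Vc c st = (\<Sum>i<length (hist_of st). (c (take i (hist_of st)) (hist_of st ! i))\<^sup>2)"

definition "Fc c l st = exp (l * Xc c st - l\<^sup>2 * sp\<^sup>2 * Vc c st / 8)"

lemma XV_step:
  fixes st s'
  defines "st' \<equiv> det_step nA r sp T \<delta> H sel st s'"
  shows "Xc c st' = Xc c st + c (hist_of st) (cur_of st, det_act sel st) * (W s' - PW (cur_of st) (det_act sel st))"
    and "Vc c st' = Vc c st + (c (hist_of st) (cur_of st, det_act sel st))\<^sup>2"
proof -
  define h where "h = hist_of st"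
  define x where "x = (cur_of st, det_act sel st)"
  have h': "hist_of st' = h @ [x]" unfolding st'_def h_def x_def by (simp add: det_step_simps)
  have tr: "trj st' (Suc i) = trj st (Suc i)" if "i < length h" for i
  proof (cases "Suc i < length h")
    case True then show ?thesis unfolding trj_def h' h_def[symmetric] by (simp add: nth_append)
  next
    case False
    then have "Suc i = length h" using that by simp
    then show ?thesis unfolding trj_def h' h_def[symmetric] x_def by (simp add: nth_append)
  qed
  have trl: "trj st' (Suc (length h)) = s'" unfolding trj_def h' by (simp add: st'_def det_step_simps)
  show "Xc c st' = Xc c st + c (hist_of st) (cur_of st, det_act sel st) * (W s' - PW (cur_of st) (det_act sel st))"
    unfolding Xc_def h' h_def[symmetric] x_def[symmetric]
    using tr trl by (simp add: nth_append x_def)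
  show "Vc c st' = Vc c st + (c (hist_of st) (cur_of st, det_act sel st))\<^sup>2"
    unfolding Vc_def h' h_def[symmetric] x_def[symmetric]
    by (simp add: nth_append x_def)
qed

end


context QL begin

lemma F_step:
  assumes cs: "cur_of st < nS"
  shows "(\<integral>\<^sup>+st'. ennreal (Fc c l st') \<partial>ql_step nA r p sp T \<delta> H sel st) \<le> ennreal (Fc c l st)"
proof -
  define s where "s = cur_of st"
  define a where "a = det_act sel st"
  define cc where "cc = c (hist_of st) (s, a)"
  define K where "K = Fc c l st * exp (- (l\<^sup>2 * sp\<^sup>2 * cc\<^sup>2 / 8))"
  have sn: "s < nS" using cs s_def by simp
  have an: "a < nA" using selp unfolding a_def det_act_eq by auto
  have eq: "Fc c l (det_step nA r sp T \<delta> H sel st s') = K * exp ((l * cc) * (W s' - PW s a))" for s'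
  proof -
    have ar: "l * (Xc c st + cc * (W s' - PW s a)) - l\<^sup>2 * sp\<^sup>2 * (Vc c st + cc\<^sup>2) / 8
        = (l * Xc c st - l\<^sup>2 * sp\<^sup>2 * Vc c st / 8) + (- (l\<^sup>2 * sp\<^sup>2 * cc\<^sup>2 / 8)) + (l * cc) * (W s' - PW s a)"
      by (simp add: field_simps)
    have "Fc c l (det_step nA r sp T \<delta> H sel st s') = exp (l * (Xc c st + cc * (W s' - PW s a)) - l\<^sup>2 * sp\<^sup>2 * (Vc c st + cc\<^sup>2) / 8)"
      unfolding Fc_def XV_step s_def[symmetric] a_def[symmetric] cc_def[symmetric] by (rule refl)
    also have "\<dots> = exp ((l * Xc c st - l\<^sup>2 * sp\<^sup>2 * Vc c st / 8) + (- (l\<^sup>2 * sp\<^sup>2 * cc\<^sup>2 / 8)) + (l * cc) * (W s' - PW s a))"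
      by (simp only: ar)
    also have "\<dots> = K * exp ((l * cc) * (W s' - PW s a))"
      unfolding K_def Fc_def by (simp only: exp_add)
    finally show ?thesis .
  qed
  have "(\<integral>\<^sup>+st'. ennreal (Fc c l st') \<partial>ql_step nA r p sp T \<delta> H sel st)
      = (\<integral>\<^sup>+s'. ennreal (Fc c l (det_step nA r sp T \<delta> H sel st s')) \<partial>p s a)"
    unfolding ql_step_eq s_def[symmetric] cur_of_def[symmetric] a_def[symmetric] by simp
  also have "\<dots> = (\<integral>\<^sup>+s'. ennreal K * ennreal (exp ((l * cc) * (W s' - PW s a))) \<partial>p s a)"
  proof -
    have "K \<ge> 0" unfolding K_def Fc_def by simp
    then show ?thesis unfolding eq by (simp add: ennreal_mult)
  qed
  also have "\<dots> = ennreal K * (\<integral>\<^sup>+s'. ennreal (exp ((l * cc) * (W s' - PW s a))) \<partial>p s a)"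
    by (rule nn_integral_cmult) simp
  also have "(\<integral>\<^sup>+s'. ennreal (exp ((l * cc) * (W s' - PW s a))) \<partial>p s a) \<le> ennreal (exp ((l * cc)\<^sup>2 * (H * J - (H * J - sp))\<^sup>2 / 8))"
    unfolding PW_def
    by (rule pmf_hoeff_nn) (use W_bnd supp_in[OF sn an] in blast)
  also have "ennreal K * ennreal (exp ((l * cc)\<^sup>2 * (H * J - (H * J - sp))\<^sup>2 / 8)) = ennreal (Fc c l st)"
  proof -
    have "K * exp ((l * cc)\<^sup>2 * (H * J - (H * J - sp))\<^sup>2 / 8) = Fc c l st"
    proof -
      have "- (l\<^sup>2 * sp\<^sup>2 * cc\<^sup>2 / 8) + (l * cc)\<^sup>2 * (H * J - (H * J - sp))\<^sup>2 / 8 = 0"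
        by (simp add: power_mult_distrib)
      then show ?thesis unfolding K_def by (simp add: exp_add[symmetric])
    qed
    moreover have "K \<ge> 0" unfolding K_def Fc_def by simp
    ultimately show ?thesis by (simp add: ennreal_mult[symmetric])
  qed
  finally show ?thesis by (simp add: mult_left_mono)
qed

lemma F_run: "(\<integral>\<^sup>+st. ennreal (Fc c l st) \<partial>ql_run nA r p sp T \<delta> H sel s1 k) \<le> 1"
proof (induction k)
  case 0
  have "Fc c l (ql_init H s1) = 1"
    unfolding Fc_def Xc_def Vc_def by (simp add: ql_init_def hist_of_def)
  then show ?case by simp
next
  case (Suc k)
  have "(\<integral>\<^sup>+st. ennreal (Fc c l st) \<partial>ql_run nA r p sp T \<delta> H sel s1 (Suc k))
      = (\<integral>\<^sup>+st. (\<integral>\<^sup>+st'. ennreal (Fc c l st') \<partial>ql_step nA r p sp T \<delta> H sel st) \<partial>ql_run nA r p sp T \<delta> H sel s1 k)"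
    by (simp only: ql_run.simps nn_integral_bind_pmf)
  also have "\<dots> \<le> (\<integral>\<^sup>+st. ennreal (Fc c l st) \<partial>ql_run nA r p sp T \<delta> H sel s1 k)"
  proof (rule nn_integral_mono_AE)
    show "AE st in measure_pmf (ql_run nA r p sp T \<delta> H sel s1 k).
        (\<integral>\<^sup>+st'. ennreal (Fc c l st') \<partial>ql_step nA r p sp T \<delta> H sel st) \<le> ennreal (Fc c l st)"
      unfolding AE_measure_pmf_iff
    proof
      fix st assume "st \<in> set_pmf (ql_run nA r p sp T \<delta> H sel s1 k)"
      then obtain xs where "\<forall>t. xs t < nS" "st = drun xs k" using reach by blast
      then have "cur_of st < nS" using cur_drun by simp
      then show "(\<integral>\<^sup>+st'. ennreal (Fc c l st') \<partial>ql_step nA r p sp T \<delta> H sel st) \<le> ennreal (Fc c l st)"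
        by (rule F_step)
    qed
  qed
  also have "\<dots> \<le> 1" by (rule Suc)
  finally show ?case .
qed

lemma markov_F:
  assumes V: "\<And>st. st \<in> set_pmf M \<Longrightarrow> Vc c st \<le> Vb" and l: "l > 0"
    and F1: "(\<integral>\<^sup>+st. ennreal (Fc c l st) \<partial>M) \<le> 1"
  shows "measure_pmf.prob M {st. x \<le> Xc c st} \<le> exp (- l * x + l\<^sup>2 * sp\<^sup>2 * Vb / 8)"
proof -
  define e0 where "e0 = exp (l * x - l\<^sup>2 * sp\<^sup>2 * Vb / 8)"
  have e0: "e0 > 0" unfolding e0_def by simp
  define A where "A = {st. x \<le> Xc c st}"
  have ind: "indicator A st \<le> ennreal (1 / e0) * ennreal (Fc c l st)" if st: "st \<in> set_pmf M" for st
  proof (cases "st \<in> A")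
    case True
    then have "x \<le> Xc c st" unfolding A_def by simp
    then have a1: "l * x \<le> l * Xc c st" using l by (intro mult_left_mono) auto
    have "l\<^sup>2 * sp\<^sup>2 * Vc c st \<le> l\<^sup>2 * sp\<^sup>2 * Vb" by (rule mult_left_mono) (use V[OF st] in auto)
    then have "l * x - l\<^sup>2 * sp\<^sup>2 * Vb / 8 \<le> l * Xc c st - l\<^sup>2 * sp\<^sup>2 * Vc c st / 8" using a1 by linarith
    then have "e0 \<le> Fc c l st" unfolding e0_def Fc_def by (rule exp_mono)
    then have "1 \<le> Fc c l st / e0" using e0 by (simp add: le_divide_eq)
    then have "ennreal 1 \<le> ennreal (1 / e0 * Fc c l st)" by (intro ennreal_leI) simp
    also have "ennreal (1 / e0 * Fc c l st) = ennreal (1 / e0) * ennreal (Fc c l st)"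
      by (rule ennreal_mult) (use e0 in \<open>auto simp: Fc_def\<close>)
    finally show ?thesis using True by simp
  next
    case False then show ?thesis by simp
  qed
  have "emeasure M A = (\<integral>\<^sup>+st. indicator A st \<partial>M)" by (rule nn_integral_indicator[symmetric]) simp
  also have "\<dots> \<le> (\<integral>\<^sup>+st. ennreal (1 / e0) * ennreal (Fc c l st) \<partial>M)"
    by (rule nn_integral_mono_AE) (use ind in \<open>simp add: AE_measure_pmf_iff\<close>)
  also have "\<dots> = ennreal (1 / e0) * (\<integral>\<^sup>+st. ennreal (Fc c l st) \<partial>M)"
    by (rule nn_integral_cmult) simp
  also have "\<dots> \<le> ennreal (1 / e0) * 1" by (rule mult_left_mono[OF F1]) simp
  finally have "ennreal (measure_pmf.prob M A) \<le> ennreal (1 / e0)"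
    by (simp only: measure_pmf.emeasure_eq_measure mult_1_right)
  moreover have "0 \<le> 1 / e0" using e0 by simp
  ultimately have "measure_pmf.prob M A \<le> 1 / e0" using ennreal_le_iff by blast
  also have "1 / e0 = exp (- (l * x - l\<^sup>2 * sp\<^sup>2 * Vb / 8))"
    unfolding e0_def exp_minus by (simp only: inverse_eq_divide)
  also have "- (l * x - l\<^sup>2 * sp\<^sup>2 * Vb / 8) = - l * x + l\<^sup>2 * sp\<^sup>2 * Vb / 8" by simp
  finally show ?thesis unfolding A_def .
qed

lemma azuma:
  assumes V: "\<And>st. st \<in> set_pmf (ql_run nA r p sp T \<delta> H sel s1 k) \<Longrightarrow> Vc c st \<le> Vb"
    and x: "x > 0" and Vb: "Vb > 0"
  shows "measure_pmf.prob (ql_run nA r p sp T \<delta> H sel s1 k) {st. x \<le> Xc c st} \<le> exp (- 2 * x\<^sup>2 / (sp\<^sup>2 * Vb))"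
proof -
  define l where "l = 4 * x / (sp\<^sup>2 * Vb)"
  have l: "l > 0" unfolding l_def using x Vb sp_pos by simp
  have "measure_pmf.prob (ql_run nA r p sp T \<delta> H sel s1 k) {st. x \<le> Xc c st} \<le> exp (- l * x + l\<^sup>2 * sp\<^sup>2 * Vb / 8)"
    by (rule markov_F[OF V l F_run])
  also have "- l * x + l\<^sup>2 * sp\<^sup>2 * Vb / 8 = - 2 * x\<^sup>2 / (sp\<^sup>2 * Vb)"
    unfolding l_def using Vb sp_pos by (simp add: field_simps power2_eq_square)
  finally show ?thesis .
qed

end


lemma aw_sq_prefix:
  assumes H: "H > 0"
  shows "(\<Sum>j<N. (aw H (Suc j) \<tau>)\<^sup>2) \<le> (\<Sum>j<\<tau>. (aw H (Suc j) \<tau>)\<^sup>2)"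
proof (cases "N \<le> \<tau>")
  case True
  then show ?thesis by (intro sum_mono2) auto
next
  case False
  have "(\<Sum>j<N. (aw H (Suc j) \<tau>)\<^sup>2) = (\<Sum>j<\<tau>. (aw H (Suc j) \<tau>)\<^sup>2) + (\<Sum>j\<in>{\<tau>..<N}. (aw H (Suc j) \<tau>)\<^sup>2)"
    using False by (metis (no_types, lifting) atLeast0LessThan le0 nat_le_linear sum.atLeastLessThan_concat)
  also have "(\<Sum>j\<in>{\<tau>..<N}. (aw H (Suc j) \<tau>)\<^sup>2) = 0"
    by (rule sum.neutral) (auto simp: aw_zero)
  finally show ?thesis by simp
qed

context QL begin

definition c1 :: "nat \<Rightarrow> nat \<Rightarrow> nat \<Rightarrow> real \<Rightarrow> (nat \<times> nat) list \<Rightarrow> nat \<times> nat \<Rightarrow> real" where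
  "c1 s0 a0 \<tau>0 \<sigma> = (\<lambda>hh pp. if pp = (s0, a0) then \<sigma> * aw H (count_list hh (s0, a0) + 1) \<tau>0 else 0)"

end

context QLT begin

lemma count_map_pr: "count_list (map pr [0..<i]) pp = cnt i pp"
  by (induction i) auto

lemma trj_ds: "i < T' \<Longrightarrow> trj (ds T') (Suc i) = xs (Suc i)"
proof -
  assume i: "i < T'"
  show ?thesis
  proof (cases "Suc i < T'")
    case True then show ?thesis unfolding trj_def hist_ds by (simp add: pr_def)
  next
    case False
    then have "Suc i = T'" using i by simp
    then show ?thesis unfolding trj_def hist_ds by (simp add: cur_ds)
  qed
qed

lemma Xc_ds: "Xc c (ds T') = (\<Sum>i<T'. c (map pr [0..<i]) (pr i) * xi i)"
  unfolding Xc_def hist_ds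
  by (rule sum.cong) (auto simp: take_map trj_ds xi_def pr_def)

lemma Vc_ds: "Vc c (ds T') = (\<Sum>i<T'. (c (map pr [0..<i]) (pr i))\<^sup>2)"
  unfolding Vc_def hist_ds
  by (rule sum.cong) (auto simp: take_map)

lemma regret_ds: "regret r J (hist_of (ds T')) = (\<Sum>t<T'. J - r (xs t) (act t))"
  unfolding regret_def hist_ds map_map
  by (simp add: interv_sum_list_conv_sum_set_nat atLeast_upt comp_def pr_def)

lemma Xc1: "Xc (c1 s0 a0 \<tau>0 \<sigma>) (ds T) = \<sigma> * WS T (s0, a0) \<tau>0 xi"
  unfolding Xc_ds WS_def c1_def count_map_pr sum_distrib_left
  by (rule sum.cong) auto

lemma Vc1:
  assumes "\<sigma>\<^sup>2 = 1" "1 \<le> \<tau>0"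
  shows "Vc (c1 s0 a0 \<tau>0 \<sigma>) (ds T) \<le> 2 * H / real \<tau>0"
proof -
  have "Vc (c1 s0 a0 \<tau>0 \<sigma>) (ds T) = (\<Sum>i<T. if pr i = (s0, a0) then (aw H (Suc (cnt i (s0, a0))) \<tau>0)\<^sup>2 else 0)"
    unfolding Vc_ds c1_def count_map_pr
    by (rule sum.cong) (auto simp: power_mult_distrib assms(1))
  also have "\<dots> = (\<Sum>j<cnt T (s0, a0). (aw H (Suc j) \<tau>0)\<^sup>2)"
    by (rule cnt_reindex0)
  also have "\<dots> \<le> (\<Sum>j<\<tau>0. (aw H (Suc j) \<tau>0)\<^sup>2)" by (rule aw_sq_prefix[OF H_pos])
  also have "\<dots> \<le> (H + 1) / (H + real \<tau>0)" by (rule aw_sq_sum[OF H_pos assms(2)])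
  also have "\<dots> \<le> 2 * H / real \<tau>0"
  proof -
    have t0: "real \<tau>0 \<ge> 1" using assms(2) by simp
    have "(H + 1) * real \<tau>0 \<le> 2 * H * (H + real \<tau>0)"
    proof -
      have "(H + 1) * real \<tau>0 \<le> (2 * H) * real \<tau>0" using H2 t0 by (intro mult_right_mono) auto
      also have "\<dots> \<le> 2 * H * (H + real \<tau>0)" using H2 by (intro mult_left_mono) auto
      finally show ?thesis .
    qed
    then show ?thesis using t0 H_pos by (simp add: field_simps)
  qed
  finally show ?thesis .
qed

lemma Xc2: "Xc (\<lambda>_ _. -1) (ds T) = (\<Sum>t<T. - xi t)"
  unfolding Xc_ds by simp

lemma Vc2: "Vc (\<lambda>_ _. -1) (ds T) = real T"
  unfolding Vc_ds by simp

end


context QL begin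

definition "x2 = sp * sqrt (real T * ln (2 / \<delta>) / 2)"
definition "Bnd = real T * sp / H + (real (nS * nA) + real nS + 1) * (H + sp)
   + 3 * (8 * sp * sqrt (H * ln (2 * real T / \<delta>)) * sqrt (real (nS * nA) * real T)) + x2 + sp"

lemma L_pos': "0 < ln (2 * real T / \<delta>)"
proof -
  have "1 < 2 * real T / \<delta>" using T1 d0 d1 by (simp add: field_simps)
  then show ?thesis by simp
qed

lemma ln2d_pos: "0 < ln (2 / \<delta>)"
  using d0 d1 by simp

lemma x2_pos: "0 < x2"
  unfolding x2_def using sp_pos ln2d_pos T1 by simp

lemma good_of_reach:
  assumes st: "st \<in> set_pmf (ql_run nA r p sp T \<delta> H sel s1 T)"
    and E1: "\<And>s0 a0 \<tau>0 \<sigma>. s0 < nS \<Longrightarrow> a0 < nA \<Longrightarrow> 1 \<le> \<tau>0 \<Longrightarrow> \<tau>0 \<le> T \<Longrightarrow> \<sigma> \<in> {1, -1} \<Longrightarrow>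
        Xc (c1 s0 a0 \<tau>0 \<sigma>) st < bon \<tau>0"
    and E2: "Xc (\<lambda>_ _. -1) st < x2"
  shows "regret r J (fst st) \<le> Bnd"
proof -
  obtain xs where xs: "\<forall>t. xs t < nS" "st = drun xs T" using reach[OF st] by blast
  interpret X: QLT nS nA r p J q s1 T \<delta> H sel xs
    by (intro QLT.intro QL_axioms QLT_axioms.intro) (use xs in auto)
  have stT: "st = X.ds T" using xs unfolding X.ds_def by simp
  have E1d: X.E1det
    unfolding X.E1det_def
  proof (intro allI impI)
    fix s a \<tau> assume h: "s < nS" "a < nA" "1 \<le> \<tau>" "\<tau> \<le> T"
    have "Xc (c1 s a \<tau> 1) st < bon \<tau>" using E1 h by simp
    then have u: "X.WS T (s, a) \<tau> X.xi < bon \<tau>" unfolding stT X.Xc1 by simp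
    have "Xc (c1 s a \<tau> (-1)) st < bon \<tau>" using E1 h by simp
    then have l: "- X.WS T (s, a) \<tau> X.xi < bon \<tau>" unfolding stT X.Xc1 by simp
    show "\<bar>X.WS T (s, a) \<tau> X.xi\<bar> \<le> bon \<tau>" using u l by simp
  qed
  have E2d: "(\<Sum>t<T. - X.xi t) \<le> x2" using E2 unfolding stT X.Xc2 by simp
  have "(\<Sum>t<T. J - r (xs t) (X.act t)) \<le> real T * sp / H + (real (nS * nA) + real nS + 1) * (H + sp) + 3 * X.BB + x2 + sp"
    by (rule X.det_regret[OF E1d E2d]) (use x2_pos in simp)
  also have "3 * X.BB \<le> 3 * (8 * sp * sqrt (H * ln (2 * real T / \<delta>)) * sqrt (real (nS * nA) * real T))"
  proof -
    have "X.BB \<le> 8 * sp * sqrt (H * ln (2 * real T / \<delta>)) * sqrt (real (nS * nA) * real T)"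
      using X.BB_bound unfolding X.LL_def .
    then show ?thesis by linarith
  qed
  finally have "(\<Sum>t<T. J - r (xs t) (X.act t)) \<le> Bnd" unfolding Bnd_def by simp
  moreover have "regret r J (fst st) = (\<Sum>t<T. J - r (xs t) (X.act t))"
    using X.regret_ds[of T] unfolding stT hist_of_def by simp
  ultimately show ?thesis by simp
qed

lemma bon_sq: "(bon \<tau>)\<^sup>2 = 16 * sp\<^sup>2 * (H / real \<tau> * ln (2 * real T / \<delta>))"
proof -
  have "0 \<le> H / real \<tau> * ln (2 * real T / \<delta>)" using H_pos L_pos' by simp
  then show ?thesis unfolding bon_def ql_bonus_def by (simp add: power_mult_distrib)
qed

lemma num1:
  assumes t: "1 \<le> \<tau>0" and SA: "real nS * real nA \<le> real T"
  shows "exp (- 2 * (bon \<tau>0)\<^sup>2 / (sp\<^sup>2 * (2 * H / real \<tau>0))) \<le> \<delta> / (4 * real (nS * nA * T))"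
proof -
  define L where "L = ln (2 * real T / \<delta>)"
  have L: "0 < L" unfolding L_def by (rule L_pos')
  have t0: "real \<tau>0 > 0" using t by simp
  have "- 2 * (bon \<tau>0)\<^sup>2 / (sp\<^sup>2 * (2 * H / real \<tau>0)) = - 16 * L"
    unfolding bon_sq L_def[symmetric] using sp_pos H_pos t0 by (simp add: field_simps power2_eq_square)
  then have "exp (- 2 * (bon \<tau>0)\<^sup>2 / (sp\<^sup>2 * (2 * H / real \<tau>0))) = exp (- 16 * L)" by simp
  also have "\<dots> \<le> exp (- (L + L))" using L by simp
  also have "exp (- (L + L)) = 1 / (exp L * exp L)" by (simp only: exp_minus exp_add inverse_eq_divide)
  also have "exp L = 2 * real T / \<delta>" unfolding L_def using d0 T1 by simp
  also have "1 / (2 * real T / \<delta> * (2 * real T / \<delta>)) = \<delta> * \<delta> / (4 * real T * real T)"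
    using d0 T1 by (simp add: field_simps)
  also have "\<dots> \<le> \<delta> / (4 * real (nS * nA * T))"
  proof -
    have SA0: "0 < real nS * real nA" using nS_pos nA_pos by simp
    have "\<delta> * (real nS * real nA) \<le> real T"
    proof -
      have "\<delta> * (real nS * real nA) \<le> 1 * (real nS * real nA)" using d1 SA0 by (intro mult_right_mono) auto
      then show ?thesis using SA by simp
    qed
    then have "\<delta> * \<delta> * (4 * (real nS * real nA * real T)) \<le> \<delta> * (4 * real T * real T)"
      using d0 T1 by (simp add: algebra_simps mult_left_mono)
    then show ?thesis using d0 T1 SA0 by (simp add: field_simps)
  qed
  finally show ?thesis .
qed

lemma num2: "exp (- 2 * x2\<^sup>2 / (sp\<^sup>2 * real T)) = \<delta> / 2"
proof -
  have "x2\<^sup>2 = sp\<^sup>2 * (real T * ln (2 / \<delta>) / 2)"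
    unfolding x2_def using ln2d_pos by (simp add: power_mult_distrib)
  then have "- 2 * x2\<^sup>2 / (sp\<^sup>2 * real T) = - ln (2 / \<delta>)" using sp_pos T1 by (simp add: field_simps)
  then show ?thesis using d0 by (simp add: exp_minus)
qed

end


context QL begin

lemma main_prob:
  assumes SA: "real nS * real nA \<le> real T"
  shows "1 - \<delta> \<le> measure_pmf.prob (ql_run nA r p sp T \<delta> H sel s1 T) {st. regret r J (fst st) \<le> Bnd}"
proof -
  define M where "M = ql_run nA r p sp T \<delta> H sel s1 T"
  define I where "I = {..<nS} \<times> {..<nA} \<times> {1..T} \<times> {1::real, -1}"
  define B1 where "B1 = (\<lambda>i. {st. bon (fst (snd (snd i))) \<le> Xc (c1 (fst i) (fst (snd i)) (fst (snd (snd i))) (snd (snd (snd i)))) st})"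
  define B2 where "B2 = {st. x2 \<le> Xc (\<lambda>_ _. -1) st}"
  define G where "G = {st::qstate. regret r J (fst st) \<le> Bnd}"
  have finI: "finite I" unfolding I_def by simp
  have cardI: "card I = nS * nA * T * 2" unfolding I_def by (simp add: card_cartesian_product)
  have cover: "st \<in> G \<union> ((\<Union>i\<in>I. B1 i) \<union> B2)" if st: "st \<in> set_pmf M" for st
  proof (cases "st \<in> (\<Union>i\<in>I. B1 i) \<union> B2")
    case True then show ?thesis by blast
  next
    case False
    have "regret r J (fst st) \<le> Bnd"
    proof (rule good_of_reach)
      show "st \<in> set_pmf (ql_run nA r p sp T \<delta> H sel s1 T)" using st unfolding M_def .
      fix s0 a0 \<tau>0 and \<sigma> :: real assume h: "s0 < nS" "a0 < nA" "1 \<le> \<tau>0" "\<tau>0 \<le> T" "\<sigma> \<in> {1, -1}"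
      then have "(s0, a0, \<tau>0, \<sigma>) \<in> I" unfolding I_def by auto
      then have "st \<notin> B1 (s0, a0, \<tau>0, \<sigma>)" using False by blast
      then show "Xc (c1 s0 a0 \<tau>0 \<sigma>) st < bon \<tau>0" unfolding B1_def by simp
    next
      show "Xc (\<lambda>_ _. -1) st < x2" using False unfolding B2_def by auto
    qed
    then show ?thesis unfolding G_def by simp
  qed
  have p1: "measure_pmf.prob M (G \<union> ((\<Union>i\<in>I. B1 i) \<union> B2)) = 1"
    using cover by (subst measure_pmf.prob_eq_1) (auto simp: AE_measure_pmf_iff)
  have "measure_pmf.prob M (G \<union> ((\<Union>i\<in>I. B1 i) \<union> B2)) \<le> measure_pmf.prob M G + measure_pmf.prob M ((\<Union>i\<in>I. B1 i) \<union> B2)"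
    by (rule measure_subadditive) (auto simp: measure_pmf.emeasure_eq_measure)
  also have "measure_pmf.prob M ((\<Union>i\<in>I. B1 i) \<union> B2) \<le> measure_pmf.prob M (\<Union>i\<in>I. B1 i) + measure_pmf.prob M B2"
    by (rule measure_subadditive) (auto simp: measure_pmf.emeasure_eq_measure)
  also have "measure_pmf.prob M (\<Union>i\<in>I. B1 i) \<le> (\<Sum>i\<in>I. measure_pmf.prob M (B1 i))"
    by (rule measure_pmf.finite_measure_subadditive_finite) (use finI in auto)
  also have "(\<Sum>i\<in>I. measure_pmf.prob M (B1 i)) \<le> (\<Sum>i\<in>I. \<delta> / (4 * real (nS * nA * T)))"
  proof (rule sum_mono)
    fix i assume i: "i \<in> I"
    obtain s0 a0 \<tau>0 \<sigma> where ieq: "i = (s0, a0, \<tau>0, \<sigma>)" by (cases i) auto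
    have h: "s0 < nS" "a0 < nA" "1 \<le> \<tau>0" "\<tau>0 \<le> T" "\<sigma> \<in> {1, -1}" using i unfolding ieq I_def by auto
    have V: "Vc (c1 s0 a0 \<tau>0 \<sigma>) st \<le> 2 * H / real \<tau>0" if st: "st \<in> set_pmf (ql_run nA r p sp T \<delta> H sel s1 T)" for st
    proof -
      obtain xs where xs: "\<forall>t. xs t < nS" "st = drun xs T" using reach[OF st] by blast
      interpret X: QLT nS nA r p J q s1 T \<delta> H sel xs
        by (intro QLT.intro QL_axioms QLT_axioms.intro) (use xs in auto)
      have "\<sigma>\<^sup>2 = 1" using h(5) by auto
      then show ?thesis using X.Vc1[OF _ h(3)] xs unfolding X.ds_def by simp
    qed
    have bpos: "0 < bon \<tau>0" unfolding bon_def ql_bonus_def using sp_pos H_pos L_pos' h(3) by simp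
    have Vb: "0 < 2 * H / real \<tau>0" using H_pos h(3) by simp
    have "measure_pmf.prob M (B1 i) \<le> exp (- 2 * (bon \<tau>0)\<^sup>2 / (sp\<^sup>2 * (2 * H / real \<tau>0)))"
      unfolding M_def B1_def ieq using azuma[OF V bpos Vb] by simp
    also have "\<dots> \<le> \<delta> / (4 * real (nS * nA * T))" by (rule num1[OF h(3) SA])
    finally show "measure_pmf.prob M (B1 i) \<le> \<delta> / (4 * real (nS * nA * T))" .
  qed
  also have "(\<Sum>i\<in>I. \<delta> / (4 * real (nS * nA * T))) = \<delta> / 2"
    using cardI nS_pos nA_pos T1 by simp
  also have "measure_pmf.prob M B2 \<le> \<delta> / 2"
  proof -
    have V: "Vc (\<lambda>_ _. -1) st \<le> real T" if st: "st \<in> set_pmf (ql_run nA r p sp T \<delta> H sel s1 T)" for st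
    proof -
      obtain xs where xs: "\<forall>t. xs t < nS" "st = drun xs T" using reach[OF st] by blast
      interpret X: QLT nS nA r p J q s1 T \<delta> H sel xs
        by (intro QLT.intro QL_axioms QLT_axioms.intro) (use xs in auto)
      show ?thesis using X.Vc2 xs unfolding X.ds_def by simp
    qed
    have "measure_pmf.prob M B2 \<le> exp (- 2 * x2\<^sup>2 / (sp\<^sup>2 * real T))"
      unfolding M_def B2_def by (rule azuma[OF V x2_pos]) (use T1 in auto)
    then show ?thesis using num2 by simp
  qed
  finally have "1 \<le> measure_pmf.prob M G + (\<delta> / 2 + \<delta> / 2)" using p1 by simp
  then show ?thesis unfolding M_def G_def by simp
qed

end


lemma cube_root_pow: "0 < x \<Longrightarrow> (x powr (1/3)) ^ 3 = (x::real)"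
proof -
  assume x: "0 < x"
  have "(x powr (1/3)) ^ 3 = (x powr (1/3)) powr (real 3)"
    by (rule powr_realpow[symmetric]) (use x in simp)
  also have "\<dots> = x" using x by (simp add: powr_powr)
  finally show ?thesis .
qed

lemma cube_le: "0 \<le> (y::real) \<Longrightarrow> x ^ 3 \<le> y ^ 3 \<Longrightarrow> x \<le> y"
proof -
  assume y: "0 \<le> y" and h: "x ^ 3 \<le> y ^ 3"
  have "x ^ Suc 2 \<le> y ^ Suc 2" using h by (simp add: numeral_3_eq_3)
  then show ?thesis using y by (rule power_le_imp_le_base)
qed

lemma ln_gt1: "4 \<le> (x::real) \<Longrightarrow> 1 < ln x"
proof -
  assume x: "4 \<le> x"
  have "exp 1 < (4::real)" using exp_le by simp
  then have "exp 1 < x" using x by simp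
  then have "ln (exp 1) < ln x" using x by (subst ln_less_cancel_iff) auto
  then show ?thesis by simp
qed

lemma final_arith:
  fixes K Tr s \<delta> H Ns :: real
  assumes K1: "1 \<le> K" and Ns: "Ns \<le> K" and Tr1: "1 \<le> Tr" and d0: "0 < \<delta>" and d1: "\<delta> < 1" and s: "0 < s"
    and Hdef: "H = min (sqrt (s * Tr / K)) ((Tr / (K * ln (4 * Tr / \<delta>))) powr (1/3))" and H2: "2 \<le> H"
  shows "Tr * s / H + (K + Ns + 1) * (H + s) + 3 * (8 * s * sqrt (H * ln (2 * Tr / \<delta>)) * sqrt (K * Tr))
      + s * sqrt (Tr * ln (2 / \<delta>) / 2) + s
    \<le> 60 * (sqrt (s * K * Tr) + s * (Tr powr (2/3) * (K * ln (Tr / \<delta>)) powr (1/3) + sqrt (Tr * ln (1 / \<delta>))))"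
proof -
  define h1 where "h1 = sqrt (s * Tr / K)"
  define L4 where "L4 = ln (4 * Tr / \<delta>)"
  define Lt where "Lt = ln (Tr / \<delta>)"
  define L2 where "L2 = ln (2 * Tr / \<delta>)"
  define Ld where "Ld = ln (1 / \<delta>)"
  define h2 where "h2 = (Tr / (K * L4)) powr (1/3)"
  have Hm: "H = min h1 h2" unfolding Hdef h1_def h2_def L4_def ..
  have K0: "0 < K" using K1 by simp
  have Tr0: "0 < Tr" using Tr1 by simp
  have L4g: "1 < L4" unfolding L4_def by (rule ln_gt1) (use Tr1 d0 d1 in \<open>simp add: field_simps\<close>)
  have h1g: "2 \<le> h1" and h2g: "2 \<le> h2" using H2 Hm by auto
  have h2c: "h2 ^ 3 = Tr / (K * L4)" unfolding h2_def by (rule cube_root_pow) (use Tr0 K0 L4g in simp)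
  have "(2::real) ^ 3 \<le> h2 ^ 3" by (rule power_mono[OF h2g]) simp
  then have "8 \<le> Tr / (K * L4)" using h2c by simp
  then have TrKL: "8 * (K * L4) \<le> Tr" using K0 L4g by (simp add: field_simps)
  have KL4: "K \<le> K * L4" using K0 L4g by simp
  have "1 * L4 \<le> K * L4" by (intro mult_right_mono) (use K1 L4g in auto)
  then have KL41: "1 < K * L4" using L4g by linarith
  have KT: "K \<le> Tr" using TrKL KL4 K0 by linarith
  have Tr8: "8 < Tr" using TrKL KL41 by linarith
  have "Tr * \<delta> < Tr * 1" using Tr0 d1 by (intro mult_strict_left_mono) auto
  then have "Tr < Tr / \<delta>" using d0 by (simp add: less_divide_eq)
  then have Ltd: "Tr / \<delta> > 8" using Tr8 by linarith
  have Lt1: "1 < Lt" unfolding Lt_def by (rule ln_gt1) (use Ltd in simp)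
  have L4eq: "L4 = ln 4 + Lt"
  proof -
    have "L4 = ln (4 * (Tr / \<delta>))" unfolding L4_def by simp
    also have "\<dots> = ln 4 + ln (Tr / \<delta>)" by (rule ln_mult_pos) (use Tr0 d0 in auto)
    finally show ?thesis unfolding Lt_def .
  qed
  have ln4: "ln 4 \<le> Lt" unfolding Lt_def using Ltd d0 by (subst ln_le_cancel_iff) auto
  have L4le: "L4 \<le> 2 * Lt" using L4eq ln4 by simp
  have L2le: "L2 \<le> L4" unfolding L2_def L4_def using Tr0 d0 by (subst ln_le_cancel_iff) (auto simp: field_simps)
  have L2pos: "0 < L2" unfolding L2_def by (rule ln_gt_zero) (use Tr1 d0 d1 in \<open>simp add: field_simps\<close>)
  have Ld0: "0 < Ld" unfolding Ld_def using d0 d1 by simp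
  define u where "u = Tr powr (1/3)"
  define w where "w = (K * L4) powr (1/3)"
  define z where "z = (K * Lt) powr (1/3)"
  have u0: "0 < u" "u ^ 3 = Tr" unfolding u_def using Tr0 cube_root_pow by auto
  have w0: "0 < w" "w ^ 3 = K * L4" unfolding w_def using K0 L4g cube_root_pow by auto
  have z0: "0 < z" "z ^ 3 = K * Lt" unfolding z_def using K0 Lt1 cube_root_pow by auto
  have h2uw: "h2 = u / w" unfolding h2_def u_def w_def using Tr0 K0 L4g by (simp add: powr_divide)
  have Tr23: "Tr powr (2/3) = u ^ 2"
  proof -
    have "Tr powr (2/3) = Tr powr (1/3 + 1/3)" by simp
    also have "\<dots> = u * u" unfolding u_def by (rule powr_add)
    finally show ?thesis by (simp add: power2_eq_square)
  qed
  have u1: "1 \<le> u" by (rule cube_le) (use u0 Tr1 in auto)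
  have z1: "1 \<le> z"
  proof (rule cube_le)
    show "0 \<le> z" using z0 by simp
    have "1 * 1 \<le> K * Lt" by (rule mult_mono) (use K1 Lt1 in auto)
    then show "1 ^ 3 \<le> z ^ 3" using z0 by simp
  qed
  have KLt0: "0 < K * Lt" using K0 Lt1 by simp
  have wz: "w \<le> 2 * z"
  proof (rule cube_le)
    show "0 \<le> 2 * z" using z0 by simp
    have "K * L4 \<le> K * (2 * Lt)" using L4le K0 by (intro mult_left_mono) auto
    moreover have "K * (2 * Lt) = 2 * (K * Lt)" by simp
    moreover have "(2 * z) ^ 3 = 8 * (K * Lt)" using z0 by (simp add: power_mult_distrib)
    ultimately show "w ^ 3 \<le> (2 * z) ^ 3" using w0 KLt0 by linarith
  qed
  define R1 where "R1 = sqrt (s * K * Tr)"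
  define R2 where "R2 = s * (u ^ 2 * z)"
  define R3 where "R3 = s * sqrt (Tr * Ld)"
  have R3_0: "0 \<le> R3" unfolding R3_def using s Tr0 Ld0 by simp
  have R1_0: "0 \<le> R1" unfolding R1_def using s K0 Tr0 by simp
  have u2: "1 \<le> u ^ 2" using u1 by (simp add: one_le_power)
  have u2z: "1 \<le> u ^ 2 * z" using mult_mono[OF u2 z1] by simp
  have R2s: "s \<le> R2"
  proof -
    have "s * 1 \<le> s * (u ^ 2 * z)" by (rule mult_left_mono) (use u2z s in auto)
    then show ?thesis unfolding R2_def by simp
  qed
  have HLh1: "H \<le> h1" and HLh2: "H \<le> h2" using Hm by auto
  have t1: "Tr * s / H \<le> R1 + 2 * R2"
  proof (cases "H = h1")
    case True
    have "h1 * R1 = Tr * s"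
    proof -
      have "h1 * R1 = sqrt (s * Tr / K * (s * K * Tr))" unfolding h1_def R1_def by (rule real_sqrt_mult[symmetric])
      also have "s * Tr / K * (s * K * Tr) = (Tr * s)^2" using K0 by (simp add: field_simps power2_eq_square)
      finally show ?thesis using Tr0 s by simp
    qed
    then have "Tr * s / H = (h1 * R1) / h1" using True by simp
    also have "\<dots> = R1" using h1g by simp
    finally have "Tr * s / H = R1" .
    then show ?thesis using R2s s by simp
  next
    case False
    then have Hh2: "H = h2" using Hm by (simp add: min_def split: if_splits)
    have "u ^ 3 * s / (u / w) = s * (u ^ 2 * w)" using u0 w0 by (simp add: field_simps power2_eq_square power3_eq_cube)
    then have "Tr * s / H = s * (u ^ 2 * w)" unfolding Hh2 h2uw u0(2) .
    also have "\<dots> \<le> s * (u ^ 2 * (2 * z))" using wz s u0 by (intro mult_left_mono) auto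
    also have "\<dots> = 2 * R2" unfolding R2_def by simp
    finally show ?thesis using R1_0 by simp
  qed
  have KH: "K * H \<le> R1"
  proof -
    have "K * H \<le> K * h1" using HLh1 K0 by (intro mult_left_mono) auto
    also have "K * h1 = R1"
    proof -
      have "sqrt (K^2 * (s * Tr / K)) = K * h1" unfolding h1_def real_sqrt_mult using K0 by simp
      moreover have "K^2 * (s * Tr / K) = s * K * Tr" using K0 by (simp add: power2_eq_square field_simps)
      ultimately show ?thesis unfolding R1_def by simp
    qed
    finally show ?thesis .
  qed
  have Ku: "K \<le> u ^ 2 * z"
  proof (rule cube_le)
    show "0 \<le> u ^ 2 * z" using u0 z0 by simp
    have "(u ^ 2 * z) ^ 3 = (u ^ 3) ^ 2 * z ^ 3" by (simp add: power_mult_distrib flip: power_mult)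
    also have "\<dots> = Tr ^ 2 * (K * Lt)" using u0 z0 by simp
    finally have e: "(u ^ 2 * z) ^ 3 = Tr ^ 2 * (K * Lt)" .
    have "K ^ 3 = K ^ 2 * K" by (simp add: power3_eq_cube power2_eq_square)
    also have "\<dots> \<le> Tr ^ 2 * K" using KT K0 by (intro mult_right_mono power_mono) auto
    also have "\<dots> = Tr ^ 2 * (K * 1)" by simp
    also have "\<dots> \<le> Tr ^ 2 * (K * Lt)" using K0 Lt1 Tr0 by (intro mult_left_mono) auto
    finally show "K ^ 3 \<le> (u ^ 2 * z) ^ 3" using e by simp
  qed
  have KS: "K * s \<le> R2"
  proof -
    have "K * s \<le> (u ^ 2 * z) * s" using Ku s by (intro mult_right_mono) auto
    then show ?thesis unfolding R2_def by (simp add: mult.commute)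
  qed
  have t2: "(K + Ns + 1) * (H + s) \<le> 3 * R1 + 3 * R2"
  proof -
    have "(K + Ns + 1) * (H + s) \<le> (3 * K) * (H + s)" using Ns K1 H2 s by (intro mult_right_mono) auto
    also have "\<dots> = 3 * (K * H) + 3 * (K * s)" by (simp add: algebra_simps)
    finally show ?thesis using KH KS by linarith
  qed
  have sq: "sqrt (H * L2) * sqrt (K * Tr) \<le> 2 * (u ^ 2 * z)"
  proof -
    have "sqrt (H * L2) * sqrt (K * Tr) = sqrt (H * L2 * (K * Tr))" by (rule real_sqrt_mult[symmetric])
    also have "\<dots> \<le> sqrt (h2 * L4 * (K * Tr))"
    proof (rule real_sqrt_le_mono)
      have "H * L2 \<le> h2 * L4" using HLh2 L2le L2pos H2 h2g by (intro mult_mono) auto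
      then show "H * L2 * (K * Tr) \<le> h2 * L4 * (K * Tr)" using K0 Tr0 by (intro mult_right_mono) auto
    qed
    also have "h2 * L4 * (K * Tr) = (u ^ 2 * w) ^ 2"
    proof -
      have "h2 * L4 * (K * Tr) = u / w * (K * L4) * Tr" unfolding h2uw by (simp add: algebra_simps)
      also have "\<dots> = u / w * w ^ 3 * u ^ 3" using w0 u0 by simp
      also have "\<dots> = (u ^ 2 * w) ^ 2" using w0 by (simp add: field_simps power2_eq_square power3_eq_cube)
      finally show ?thesis .
    qed
    also have "sqrt ((u ^ 2 * w) ^ 2) = u ^ 2 * w" using u0 w0 by simp
    also have "u ^ 2 * w \<le> u ^ 2 * (2 * z)" using wz by (intro mult_left_mono) auto
    finally show ?thesis by simp
  qed
  have t3: "3 * (8 * s * sqrt (H * L2) * sqrt (K * Tr)) \<le> 48 * R2"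
  proof -
    have "8 * s * (sqrt (H * L2) * sqrt (K * Tr)) \<le> 8 * s * (2 * (u ^ 2 * z))" using s sq by (intro mult_left_mono) auto
    moreover have "3 * (8 * s * sqrt (H * L2) * sqrt (K * Tr)) = 3 * (8 * s * (sqrt (H * L2) * sqrt (K * Tr)))"
      by (simp add: mult.assoc)
    moreover have "48 * R2 = 3 * (8 * s * (2 * (u ^ 2 * z)))" unfolding R2_def by simp
    ultimately show ?thesis by linarith
  qed
  have t4: "s * sqrt (Tr * ln (2 / \<delta>) / 2) \<le> R2 + R3"
  proof -
    have l2: "ln (2 / \<delta>) = ln 2 + Ld" unfolding Ld_def using d0 by (simp add: ln_div)
    have "Tr * ln (2 / \<delta>) / 2 \<le> Tr + Tr * Ld"
    proof -
      have "ln 2 \<le> (1::real)" using ln_2_less_1 by simp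
      then have "ln (2 / \<delta>) \<le> 2 * (1 + Ld)" using l2 Ld0 by simp
      then have "Tr * ln (2 / \<delta>) \<le> Tr * (2 * (1 + Ld))" using Tr0 by (intro mult_left_mono) auto
      then show ?thesis by (simp add: algebra_simps)
    qed
    then have "sqrt (Tr * ln (2 / \<delta>) / 2) \<le> sqrt (Tr + Tr * Ld)" by (rule real_sqrt_le_mono)
    also have "\<dots> \<le> sqrt Tr + sqrt (Tr * Ld)" by (rule sqrt_add_le_add_sqrt) (use Tr0 Ld0 in auto)
    finally have "s * sqrt (Tr * ln (2 / \<delta>) / 2) \<le> s * (sqrt Tr + sqrt (Tr * Ld))" using s by (intro mult_left_mono) auto
    then have a: "s * sqrt (Tr * ln (2 / \<delta>) / 2) \<le> s * sqrt Tr + R3" unfolding R3_def by (simp add: distrib_left)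
    have "Tr \<le> (u ^ 2) ^ 2"
    proof -
      have "Tr = 1 * u ^ 3" using u0 by simp
      also have "\<dots> \<le> u * u ^ 3" using u1 u0 by (intro mult_right_mono) auto
      also have "\<dots> = (u ^ 2) ^ 2" by (simp add: power2_eq_square power3_eq_cube)
      finally show ?thesis .
    qed
    then have "sqrt Tr \<le> sqrt ((u ^ 2) ^ 2)" by (rule real_sqrt_le_mono)
    also have "\<dots> = u ^ 2" by (subst real_sqrt_abs) simp
    also have "\<dots> = u ^ 2 * 1" by simp
    also have "\<dots> \<le> u ^ 2 * z" using z1 u0 by (intro mult_left_mono) auto
    finally have "s * sqrt Tr \<le> s * (u ^ 2 * z)" using s by (intro mult_left_mono) auto
    then show ?thesis using a unfolding R2_def by linarith
  qed
  have main: "Tr * s / H + (K + Ns + 1) * (H + s) + 3 * (8 * s * sqrt (H * L2) * sqrt (K * Tr)) + s * sqrt (Tr * ln (2 / \<delta>) / 2) + s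
      \<le> 60 * (R1 + R2 + R3)"
  proof -
    define A where "A = Tr * s / H"
    define B where "B = (K + Ns + 1) * (H + s)"
    define C where "C = 3 * (8 * s * sqrt (H * L2) * sqrt (K * Tr))"
    define D where "D = s * sqrt (Tr * ln (2 / \<delta>) / 2)"
    have "A \<le> R1 + 2 * R2" "B \<le> 3 * R1 + 3 * R2" "C \<le> 48 * R2" "D \<le> R2 + R3"
      using t1 t2 t3 t4 unfolding A_def B_def C_def D_def by auto
    then have "A + B + C + D + s \<le> 60 * (R1 + R2 + R3)" using R2s R1_0 R3_0 s by (smt (verit))
    then show ?thesis unfolding A_def B_def C_def D_def .
  qed
  have R2eq: "R2 = s * (Tr powr (2/3) * (K * ln (Tr / \<delta>)) powr (1/3))"
    unfolding R2_def Tr23 z_def Lt_def ..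
  have "60 * (R1 + R2 + R3) = 60 * (sqrt (s * K * Tr) + s * (Tr powr (2/3) * (K * ln (Tr / \<delta>)) powr (1/3) + sqrt (Tr * ln (1 / \<delta>))))"
    unfolding R2eq R1_def R3_def Ld_def by (simp add: algebra_simps)
  then show ?thesis using main unfolding L2_def by simp
qed

lemma KT_from:
  fixes K Tr s \<delta> H :: real
  assumes K1: "1 \<le> K" and Tr1: "1 \<le> Tr" and d0: "0 < \<delta>" and d1: "\<delta> < 1"
    and Hdef: "H = min (sqrt (s * Tr / K)) ((Tr / (K * ln (4 * Tr / \<delta>))) powr (1/3))" and H2: "2 \<le> H"
  shows "K \<le> Tr"
proof -
  define L4 where "L4 = ln (4 * Tr / \<delta>)"
  define h2 where "h2 = (Tr / (K * L4)) powr (1/3)"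
  have K0: "0 < K" using K1 by simp
  have Tr0: "0 < Tr" using Tr1 by simp
  have L4g: "1 < L4" unfolding L4_def by (rule ln_gt1) (use Tr1 d0 d1 in \<open>simp add: field_simps\<close>)
  have h2g: "2 \<le> h2" using H2 Hdef unfolding h2_def L4_def by simp
  have h2c: "h2 ^ 3 = Tr / (K * L4)" unfolding h2_def by (rule cube_root_pow) (use Tr0 K0 L4g in simp)
  have "(2::real) ^ 3 \<le> h2 ^ 3" by (rule power_mono[OF h2g]) simp
  then have "8 \<le> Tr / (K * L4)" using h2c by simp
  then have TrKL: "8 * (K * L4) \<le> Tr" using K0 L4g by (simp add: field_simps)
  have KL4: "K \<le> K * L4" using K0 L4g by simp
  show ?thesis using TrKL KL4 K0 by linarith
qed


theorem theorem1:
  shows "\<exists>C::real. \<forall>nS nA r p J q s1 (T::nat) (\<delta>::real) H sel.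
    mdp_wf nS nA r p \<longrightarrow> weakly_communicating nS nA p \<longrightarrow>
    bellman nS nA r p J q \<longrightarrow> s1 < nS \<longrightarrow>
    1 \<le> T \<longrightarrow> 0 < \<delta> \<longrightarrow> \<delta> < 1 \<longrightarrow>
    (\<forall>h s f. sel h s f < nA \<and> (\<forall>b<nA. f b \<le> f (sel h s f))) \<longrightarrow>
    H = min (sqrt (span nS (vfun nA q) * real T / (real nS * real nA)))
            ((real T / (real nS * real nA * ln (4 * real T / \<delta>))) powr (1/3)) \<longrightarrow>
    2 \<le> H \<longrightarrow>
    measure_pmf.prob (ql_run nA r p (span nS (vfun nA q)) T \<delta> H sel s1 T)
      {st. regret r J (fst st) \<le>
         C * (sqrt (span nS (vfun nA q) * real nS * real nA * real T)
              + span nS (vfun nA q) *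
                  (real T powr (2/3) * (real nS * real nA * ln (real T / \<delta>)) powr (1/3)
                   + sqrt (real T * ln (1 / \<delta>))))}
      \<ge> 1 - \<delta>"
proof (intro exI[of _ 60] allI impI)
  fix nS nA :: nat and r :: "nat \<Rightarrow> nat \<Rightarrow> real" and p :: "nat \<Rightarrow> nat \<Rightarrow> nat pmf"
    and J :: real and q :: "nat \<Rightarrow> nat \<Rightarrow> real" and s1 T :: nat and \<delta> H :: real
    and sel :: "(nat \<times> nat) list \<Rightarrow> nat \<Rightarrow> (nat \<Rightarrow> real) \<Rightarrow> nat"
  assume wf: "mdp_wf nS nA r p" and wc: "weakly_communicating nS nA p"
    and bell: "bellman nS nA r p J q" and s1: "s1 < nS" and T1: "1 \<le> T"
    and d0: "0 < \<delta>" and d1: "\<delta> < 1"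
    and selp: "\<forall>h s f. sel h s f < nA \<and> (\<forall>b<nA. f b \<le> f (sel h s f))"
    and Hdef: "H = min (sqrt (span nS (vfun nA q) * real T / (real nS * real nA)))
            ((real T / (real nS * real nA * ln (4 * real T / \<delta>))) powr (1/3))"
    and H2: "2 \<le> H"
  define spv where "spv = span nS (vfun nA q)"
  have nS0: "0 < nS" and nA0: "0 < nA" using wf by (auto simp: mdp_wf_def)
  define K where "K = real nS * real nA"
  have K1: "1 \<le> K" unfolding K_def using nS0 nA0
    by (metis less_one mult_mono not_le of_nat_1 of_nat_le_iff of_nat_0_le_iff mult_1_left linorder_not_less)
  have Tr1: "1 \<le> real T" using T1 by simp
  have HdefK: "H = min (sqrt (spv * real T / K)) ((real T / (K * ln (4 * real T / \<delta>))) powr (1/3))"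
    using Hdef unfolding spv_def K_def .
  have spv_pos: "0 < spv"
  proof -
    have "2 \<le> sqrt (spv * real T / K)" using H2 HdefK by simp
    then have "0 < spv * real T / K" by (smt (verit) real_sqrt_le_0_iff)
    then show ?thesis using K1 T1 by (simp add: zero_less_divide_iff zero_less_mult_iff)
  qed
  have SA: "real nS * real nA \<le> real T"
    using KT_from[OF K1 Tr1 d0 d1 HdefK H2] unfolding K_def .
  interpret QL nS nA r p J q s1 T \<delta> H sel
    by unfold_locales (use wf bell s1 T1 d0 d1 selp H2 spv_pos in \<open>auto simp: spv_def\<close>)
  have mp: "1 - \<delta> \<le> measure_pmf.prob (ql_run nA r p spv T \<delta> H sel s1 T) {st. regret r J (fst st) \<le> Bnd}"
    unfolding spv_def by (rule main_prob[OF SA])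
  have Nsle: "real nS \<le> K"
  proof -
    have "real nS * 1 \<le> real nS * real nA" by (rule mult_left_mono) (use nA0 in auto)
    then show ?thesis unfolding K_def by simp
  qed
  have fa: "real T * spv / H + (K + real nS + 1) * (H + spv) + 3 * (8 * spv * sqrt (H * ln (2 * real T / \<delta>)) * sqrt (K * real T))
      + spv * sqrt (real T * ln (2 / \<delta>) / 2) + spv
    \<le> 60 * (sqrt (spv * K * real T) + spv * (real T powr (2/3) * (K * ln (real T / \<delta>)) powr (1/3) + sqrt (real T * ln (1 / \<delta>))))"
    by (rule final_arith[OF K1 Nsle Tr1 d0 d1 spv_pos HdefK H2])
  have "Bnd \<le> 60 * (sqrt (spv * real nS * real nA * real T)
              + spv * (real T powr (2/3) * (real nS * real nA * ln (real T / \<delta>)) powr (1/3)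
                   + sqrt (real T * ln (1 / \<delta>))))"
    using fa unfolding Bnd_def x2_def K_def spv_def by (simp add: mult.assoc)
  then have sub: "{st. regret r J (fst st) \<le> Bnd} \<subseteq> {st. regret r J (fst st) \<le> 60 * (sqrt (spv * real nS * real nA * real T)
              + spv * (real T powr (2/3) * (real nS * real nA * ln (real T / \<delta>)) powr (1/3)
                   + sqrt (real T * ln (1 / \<delta>))))}"
    by auto
  have "measure_pmf.prob (ql_run nA r p spv T \<delta> H sel s1 T) {st. regret r J (fst st) \<le> Bnd}
     \<le> measure_pmf.prob (ql_run nA r p spv T \<delta> H sel s1 T) {st. regret r J (fst st) \<le> 60 * (sqrt (spv * real nS * real nA * real T)
              + spv * (real T powr (2/3) * (real nS * real nA * ln (real T / \<delta>)) powr (1/3)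
                   + sqrt (real T * ln (1 / \<delta>))))}"
    by (rule measure_pmf.finite_measure_mono[OF sub]) simp
  then show "1 - \<delta> \<le> measure_pmf.prob (ql_run nA r p (span nS (vfun nA q)) T \<delta> H sel s1 T)
      {st. regret r J (fst st) \<le>
         60 * (sqrt (span nS (vfun nA q) * real nS * real nA * real T)
              + span nS (vfun nA q) *
                  (real T powr (2/3) * (real nS * real nA * ln (real T / \<delta>)) powr (1/3)
                   + sqrt (real T * ln (1 / \<delta>))))}"
    using mp unfolding spv_def by linarith
qed

end
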